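(* Fix integers $N\ge 1$, $K\ge 1$ and an adjacency matrix $\mathbb H$. For every policy $\pi$ there exists an instance $\nu\in\mathcal E_0$ such that $$\mathcal R^{\mathrm{naive}}_\nu(T,\pi)=\Omega\Big(\tfrac{1}{\sqrt N}\big(T\wedge \sqrt{K^N T}\big)\Big).$$
   Context: Bandit with network interference: $\mathcal K=[K]$ is the arm set, $\mathcal U=[N]$ the unit set, $T$ the horizon, $\mathbb H=(h_{ij})$ a fixed adjacency matrix among units. In each round $t\in[T]$ a policy chooses a super arm $A_t=(a_{1,t},\dots,a_{N,t})\in\mathcal K^{\mathcal U}$ and observes, for every unit $i$, the reward $r_{i,t}(A_t)=Y_i(A_t)+\eta_{i,t}$, where the potential outcomes $Y_i(A)\in[0,1]$ ($i\in\mathcal U$, $A\in\mathcal K^{\mathcal U}$) are unknown fixed numbers and the noises $\eta_{i,t}$ are i.i.d. zero-mean 1-sub-Gaussian. An instance $\nu$ is any admissible choice of the reward distributions of the $r_i(A)$; $\mathcal E_0$ is the set of all instances. A policy $\pi=(\pi_1,\dots,\pi_T)$ maps the history $\mathcal H_{t-1}=\{A_1,(r_{i,1}(A_1))_i,\dots,A_{t-1},(r_{i,t-1}(A_{t-1}))_i\}$ to a distribution of $A_t$. The naive regret is $$\mathcal R^{\mathrm{naive}}_\nu(T,\pi)=\frac TN\sum_{i\in\mathcal U}Y_i(A^* )-\mathbb E_\pi\Big[\frac1N\sum_{t\in[T]}\sum_{i\in\mathcal U}r_{i,t}(A_t)\Big],\qquad A^*\in\arg\max_{A\in\mathcal K^{\mathcal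 U}}\frac1N\sum_{i\in\mathcal U}Y_i(A).$$ $a\wedge b=\min\{a,b\}$; $\Omega$ hides a positive constant independent of $T,K,N$. *)

theory Defs
  imports "HOL-Probability.Probability"
begin

text \<open>Units are 0..N-1, arms are 0..K-1, rounds are 0..T-1.
  A super arm is an extensional function from units to arms.\<close>

definition superarms :: "nat \<Rightarrow> nat \<Rightarrow> (nat \<Rightarrow> nat) set" where
  "superarms N K = PiE {..<N} (\<lambda>_. {..<K})"

text \<open>An instance: potential outcomes Y i A in [0,1] and a common noise law P,
  zero-mean and 1-sub-Gaussian; the reward of unit i under A is Y i A + noise,
  noises i.i.d. over units and rounds.\<close>

definition admissible_instance ::
  "nat \<Rightarrow> nat \<Rightarrow> (nat \<Rightarrow> (nat \<Rightarrow> nat) \<Rightarrow> real) \<Rightarrow> real measure \<Rightarrow> bool" where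
  "admissible_instance N K Y P \<longleftrightarrow>
     (\<forall>i<N. \<forall>A\<in>superarms N K. 0 \<le> Y i A \<and> Y i A \<le> 1) \<and>
     prob_space P \<and> sets P = sets borel \<and>
     integrable P (\<lambda>x. x) \<and> (\<integral>x. x \<partial>P) = 0 \<and>
     (\<forall>l::real. integrable P (\<lambda>x. exp (l * x)) \<and> (\<integral>x. exp (l * x) \<partial>P) \<le> exp (l\<^sup>2 / 2))"

definition reward_measure ::
  "nat \<Rightarrow> (nat \<Rightarrow> (nat \<Rightarrow> nat) \<Rightarrow> real) \<Rightarrow> real measure \<Rightarrow> (nat \<Rightarrow> nat) \<Rightarrow> (nat \<Rightarrow> real) measure" where
  "reward_measure N Y P A = PiM {..<N} (\<lambda>i. distr P borel (\<lambda>x. Y i A + x))"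

text \<open>Histories before round t: functions on {..<t} giving (super arm, reward vector).\<close>
type_synonym history = "nat \<Rightarrow> (nat \<Rightarrow> nat) \<times> (nat \<Rightarrow> real)"

definition histM :: "nat \<Rightarrow> nat \<Rightarrow> nat \<Rightarrow> history measure" where
  "histM N K t = PiM {..<t} (\<lambda>_. count_space (superarms N K) \<Otimes>\<^sub>M PiM {..<N} (\<lambda>_. (borel :: real measure)))"

type_synonym policy = "nat \<Rightarrow> history \<Rightarrow> (nat \<Rightarrow> nat) pmf"

definition admissible_policy :: "nat \<Rightarrow> nat \<Rightarrow> policy \<Rightarrow> bool" where
  "admissible_policy N K \<pi> \<longleftrightarrow>
     (\<forall>t h. set_pmf (\<pi> t h) \<subseteq> superarms N K) \<and>
     (\<forall>t A. (\<lambda>h. pmf (\<pi> t h) A) \<in> borel_measurable (histM N K t))"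

text \<open>exp_reward ... k t h = expected value of (1/N) * sum of all unit rewards
  collected in the k rounds t, ..., t+k-1, given history h before round t.\<close>
primrec exp_reward ::
  "nat \<Rightarrow> nat \<Rightarrow> (nat \<Rightarrow> (nat \<Rightarrow> nat) \<Rightarrow> real) \<Rightarrow> real measure \<Rightarrow> policy \<Rightarrow>
   nat \<Rightarrow> nat \<Rightarrow> history \<Rightarrow> real" where
  "exp_reward N K Y P \<pi> 0 t h = 0"
| "exp_reward N K Y P \<pi> (Suc k) t h =
     (\<Sum>A\<in>superarms N K. pmf (\<pi> t h) A *
        (\<integral>r. (1 / real N) * (\<Sum>i<N. r i) + exp_reward N K Y P \<pi> k (Suc t) (h(t := (A, r)))
          \<partial>reward_measure N Y P A))"

definition naive_regret ::
  "nat \<Rightarrow> nat \<Rightarrow> (nat \<Rightarrow> (nat \<Rightarrow> nat) \<Rightarrow> real) \<Rightarrow> real measure \<Rightarrow> policy \<Rightarrow> nat \<Rightarrow> real" where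
  "naive_regret N K Y P \<pi> T =
     real T * Max ((\<lambda>A. (1 / real N) * (\<Sum>i<N. Y i A)) ` superarms N K)
     - exp_reward N K Y P \<pi> T 0 (\<lambda>_. undefined)"

end

theory Submission
  imports Defs
begin


definition noiseP :: "real measure" where
  "noiseP = density lborel std_normal_density"

lemma prob_noiseP: "prob_space noiseP"
  using real_dist_normal_dist unfolding noiseP_def real_distribution_def by simp

lemma sets_noiseP[simp]: "sets noiseP = sets borel"
  unfolding noiseP_def by simp

lemma normal_exp_shift:
  "exp (l * x) * std_normal_density x = exp (l\<^sup>2 / 2) * normal_density l 1 x"
proof -
  have e: "l * x + (- x\<^sup>2 / 2) = l\<^sup>2 / 2 + (-(x - l)\<^sup>2 / 2)"
    by (simp add: power2_eq_square field_simps)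
  have "exp (l * x) * exp (- x\<^sup>2 / 2) = exp (l\<^sup>2 / 2) * exp (-(x - l)\<^sup>2 / 2)"
    by (simp only: exp_add[symmetric] e)
  then show ?thesis unfolding normal_density_def by (simp add: field_simps)
qed

lemma admissible_noise:
  shows "prob_space noiseP \<and> sets noiseP = sets borel \<and>
     integrable noiseP (\<lambda>x. x) \<and> (\<integral>x. x \<partial>noiseP) = 0 \<and>
     (\<forall>l::real. integrable noiseP (\<lambda>x. exp (l * x)) \<and> (\<integral>x. exp (l * x) \<partial>noiseP) \<le> exp (l\<^sup>2 / 2))"
proof (intro conjI allI)
  show "prob_space noiseP" by (rule prob_noiseP)
  show "sets noiseP = sets borel" by simp
  show "integrable noiseP (\<lambda>x. x)"
    unfolding noiseP_def
    using integrable_std_normal_moment[of 1]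
    by (subst integrable_density) auto
  show "(\<integral>x. x \<partial>noiseP) = 0"
    unfolding noiseP_def
    using integral_std_normal_moment_odd[of 0]
    by (subst integral_density) auto
  fix l :: real
  have eq: "(\<lambda>x. std_normal_density x * exp (l * x)) = (\<lambda>x. exp (l\<^sup>2 / 2) * normal_density l 1 x)"
    by (rule ext) (metis normal_exp_shift mult.commute)
  show "integrable noiseP (\<lambda>x. exp (l * x))"
    unfolding noiseP_def
    by (subst integrable_density) (auto simp: eq real_scaleR_def)
  show "(\<integral>x. exp (l * x) \<partial>noiseP) \<le> exp (l\<^sup>2 / 2)"
    unfolding noiseP_def
    by (subst integral_density) (auto simp: eq real_scaleR_def)
qed

lemma gauss_shift:
  "distr noiseP borel (\<lambda>x. \<mu> + x) = density lborel (normal_density \<mu> 1)"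
proof (rule measure_eqI)
  show "sets (distr noiseP borel (\<lambda>x. \<mu> + x)) = sets (density lborel (normal_density \<mu> 1))"
    by simp
  fix A assume A: "A \<in> sets (distr noiseP borel (\<lambda>x. \<mu> + x))"
  then have Ab: "A \<in> sets borel" by simp
  have Ap: "(+) \<mu> -` A \<in> sets borel"
    using Ab measurable_sets_borel[of "(+) \<mu>" borel A] by auto
  have "emeasure (distr noiseP borel (\<lambda>x. \<mu> + x)) A = emeasure noiseP ((\<lambda>x. \<mu> + x) -` A \<inter> space noiseP)"
    using Ab measurable_sets_borel[of "(+) \<mu>" borel A] by (subst emeasure_distr) (auto simp: noiseP_def)
  also have "\<dots> = (\<integral>\<^sup>+x. ennreal (std_normal_density x) * indicator ((\<lambda>x. \<mu> + x) -` A) x \<partial>lborel)"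
    unfolding noiseP_def using Ab Ap
    by (subst emeasure_density) auto
  also have "\<dots> = (\<integral>\<^sup>+x. ennreal (normal_density \<mu> 1 (\<mu> + 1 * x)) * indicator A (\<mu> + 1 * x) \<partial>lborel)"
    by (intro nn_integral_cong) (auto simp: normal_density_def indicator_def)
  also have "\<dots> = (\<integral>\<^sup>+y. ennreal (normal_density \<mu> 1 y) * indicator A y \<partial>lborel)"
    using Ab by (subst nn_integral_real_affine[where c=1 and t=\<mu>]) auto
  also have "\<dots> = emeasure (density lborel (normal_density \<mu> 1)) A"
    using Ab by (subst emeasure_density) auto
  finally show "emeasure (distr noiseP borel (\<lambda>x. \<mu> + x)) A = emeasure (density lborel (normal_density \<mu> 1)) A" .
qed

definition lratio :: "real \<Rightarrow> real \<Rightarrow> real \<Rightarrow> real" where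
  "lratio \<mu> \<Delta> y = exp (\<Delta> * (y - \<mu>) - \<Delta>\<^sup>2 / 2)"

lemma shift_density:
  "distr noiseP borel (\<lambda>x. (\<mu> + \<Delta>) + x) = density (distr noiseP borel (\<lambda>x. \<mu> + x)) (lratio \<mu> \<Delta>)"
proof -
  have pt: "normal_density \<mu> 1 y * lratio \<mu> \<Delta> y = normal_density (\<mu> + \<Delta>) 1 y" for y
  proof -
    have e: "-(y - \<mu>)\<^sup>2 / 2 + (\<Delta> * (y - \<mu>) - \<Delta>\<^sup>2 / 2) = -(y - (\<mu> + \<Delta>))\<^sup>2 / 2"
      by (simp add: power2_eq_square field_simps)
    have "exp (-(y - \<mu>)\<^sup>2 / 2) * exp (\<Delta> * (y - \<mu>) - \<Delta>\<^sup>2 / 2) = exp (-(y - (\<mu> + \<Delta>))\<^sup>2 / 2)"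
      by (simp only: exp_add[symmetric] e)
    then show ?thesis unfolding normal_density_def lratio_def by simp
  qed
  show ?thesis
    unfolding gauss_shift
    by (subst density_density_eq) (auto simp: lratio_def ennreal_mult'[symmetric] pt[unfolded lratio_def])
qed


lemma prob_shift: "prob_space (distr noiseP borel (\<lambda>x. \<mu> + x))"
proof (rule prob_space.prob_space_distr[OF prob_noiseP])
  have "(\<lambda>x. \<mu> + x) \<in> borel_measurable (borel :: real measure)" by auto
  then show "(\<lambda>x. \<mu> + x) \<in> borel_measurable noiseP"
    by (subst measurable_cong_sets[OF sets_noiseP refl])
qed

lemma prob_RM: "prob_space (reward_measure N Y noiseP A)"
  unfolding reward_measure_def by (rule prob_space_PiM) (rule prob_shift)

lemma sets_RM: "sets (reward_measure N Y noiseP A) = sets (PiM {..<N} (\<lambda>_. (borel :: real measure)))"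
  unfolding reward_measure_def by (rule sets_PiM_cong) auto

lemma space_RM: "space (reward_measure N Y noiseP A) = space (PiM {..<N} (\<lambda>_. (borel :: real measure)))"
  by (rule sets_eq_imp_space_eq[OF sets_RM])

lemma shift_mean:
  "integrable (distr noiseP borel (\<lambda>x. \<mu> + x)) (\<lambda>y. y) \<and> (\<integral>y. y \<partial>distr noiseP borel (\<lambda>x. \<mu> + x)) = \<mu>"
proof -
  interpret prob_space noiseP by (rule prob_noiseP)
  have i: "integrable noiseP (\<lambda>x. x)" and z: "(\<integral>x. x \<partial>noiseP) = 0"
    using admissible_noise by auto
  have "integrable noiseP (\<lambda>x. \<mu> + x)" using i by auto
  moreover have "(\<integral>x. \<mu> + x \<partial>noiseP) = \<mu>"
    using i z by (simp add: prob_space)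
  ultimately show ?thesis
    by (simp add: integrable_distr_eq integral_distr)
qed

lemma RM_component:
  assumes i: "i < N"
  shows "integrable (reward_measure N Y noiseP A) (\<lambda>r. r i) \<and> (\<integral>r. r i \<partial>reward_measure N Y noiseP A) = Y i A"
proof -
  let ?M = "\<lambda>i. distr noiseP borel (\<lambda>x. Y i A + x)"
  have d: "distr (PiM {..<N} ?M) (?M i) (\<lambda>\<omega>. \<omega> i) = ?M i"
    using i by (intro distr_PiM_component prob_shift) auto
  have m: "(\<lambda>\<omega>. \<omega> i) \<in> measurable (PiM {..<N} ?M) (?M i)"
    using i by (auto intro!: measurable_component_singleton)
  have "integrable (?M i) (\<lambda>y. y) = integrable (distr (PiM {..<N} ?M) (?M i) (\<lambda>\<omega>. \<omega> i)) (\<lambda>y. y)"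
    by (simp only: d)
  also have "\<dots> = integrable (PiM {..<N} ?M) (\<lambda>r. r i)"
    by (rule integrable_distr_eq[OF m]) auto
  finally have 1: "integrable (PiM {..<N} ?M) (\<lambda>r. r i) = integrable (?M i) (\<lambda>y. y)" ..
  have "(\<integral>y. y \<partial>?M i) = (\<integral>y. y \<partial>distr (PiM {..<N} ?M) (?M i) (\<lambda>\<omega>. \<omega> i))"
    by (simp only: d)
  also have "\<dots> = (\<integral>r. r i \<partial>PiM {..<N} ?M)"
    by (rule integral_distr[OF m]) auto
  finally have 2: "(\<integral>r. r i \<partial>PiM {..<N} ?M) = (\<integral>y. y \<partial>?M i)" ..
  show ?thesis using 1 2 shift_mean[of "Y i A"]
    unfolding reward_measure_def by simp
qed

lemma PiM_density:
  fixes M :: "'i \<Rightarrow> 'a measure" and f :: "'i \<Rightarrow> 'a \<Rightarrow> real"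
  assumes fin: "finite I"
    and prob: "\<And>i. prob_space (M i)"
    and probd: "\<And>i. prob_space (density (M i) (f i))"
    and meas: "\<And>i. f i \<in> borel_measurable (M i)"
    and nn: "\<And>i x. 0 \<le> f i x"
  shows "PiM I (\<lambda>i. density (M i) (f i)) = density (PiM I M) (\<lambda>x. ennreal (\<Prod>i\<in>I. f i (x i)))"
proof -
  have pe: "(\<lambda>x. ennreal (\<Prod>i\<in>I. f i (x i))) = (\<lambda>x. \<Prod>i\<in>I. ennreal (f i (x i)))"
    using nn by (auto simp: prod_ennreal)
  interpret P: product_sigma_finite "\<lambda>i. density (M i) (f i)"
    unfolding product_sigma_finite_def
    using probd by (auto intro: prob_space_imp_sigma_finite)
  interpret Q: product_sigma_finite M
    unfolding product_sigma_finite_def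
    using prob by (auto intro: prob_space_imp_sigma_finite)
  have fm: "(\<lambda>x. ennreal (f i (x i))) \<in> borel_measurable (PiM I M)" if "i \<in> I" for i
  proof (rule measurable_compose[where f="\<lambda>x. x i"])
    show "(\<lambda>x. x i) \<in> measurable (PiM I M) (M i)" using that by (rule measurable_component_singleton)
    show "(\<lambda>y. ennreal (f i y)) \<in> borel_measurable (M i)" using meas[of i] by simp
  qed
  have msp: "\<And>x. x \<in> space (PiM I M) \<Longrightarrow> x \<in> PiE I (\<lambda>i. space (M i))"
    by (simp add: space_PiM)
  show ?thesis unfolding pe
  proof (rule P.PiM_eqI[symmetric, OF fin])
    show "sets (density (Pi\<^sub>M I M) (\<lambda>x. \<Prod>i\<in>I. ennreal (f i (x i)))) = sets (Pi\<^sub>M I (\<lambda>i. density (M i) (f i)))"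
      by (subst sets_density, rule sets_PiM_cong) auto
    fix A assume A: "\<And>i. i \<in> I \<Longrightarrow> A i \<in> sets (density (M i) (f i))"
    then have A': "\<And>i. i \<in> I \<Longrightarrow> A i \<in> sets (M i)" by simp
    have PA: "PiE I A \<in> sets (PiM I M)"
      using A' by (auto intro: sets_PiM_I_finite fin)
    have "emeasure (density (Pi\<^sub>M I M) (\<lambda>x. \<Prod>i\<in>I. ennreal (f i (x i)))) (Pi\<^sub>E I A)
        = (\<integral>\<^sup>+x. (\<Prod>i\<in>I. ennreal (f i (x i))) * indicator (PiE I A) x \<partial>PiM I M)"
      using PA by (subst emeasure_density) (auto intro!: borel_measurable_prod_ennreal fm)
    also have "\<dots> = (\<integral>\<^sup>+x. (\<Prod>i\<in>I. ennreal (f i (x i)) * indicator (A i) (x i)) \<partial>PiM I M)"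
    proof (intro nn_integral_cong)
      fix x assume x: "x \<in> space (PiM I M)"
      have "indicator (PiE I A) x = (\<Prod>i\<in>I. indicator (A i) (x i) :: ennreal)"
        using msp[OF x] fin by (auto simp: indicator_def PiE_iff prod_ennreal)
      then show "(\<Prod>i\<in>I. ennreal (f i (x i))) * indicator (PiE I A) x = (\<Prod>i\<in>I. ennreal (f i (x i)) * indicator (A i) (x i))"
        by (simp add: prod.distrib)
    qed
    also have "\<dots> = (\<Prod>i\<in>I. (\<integral>\<^sup>+y. ennreal (f i y) * indicator (A i) y \<partial>M i))"
      using A' meas by (subst Q.product_nn_integral_prod[OF fin]) auto
    also have "\<dots> = (\<Prod>i\<in>I. emeasure (density (M i) (f i)) (A i))"
      using A' meas by (intro prod.cong refl) (simp add: emeasure_density)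
    finally show "emeasure (density (Pi\<^sub>M I M) (\<lambda>x. \<Prod>i\<in>I. ennreal (f i (x i)))) (Pi\<^sub>E I A) = (\<Prod>i\<in>I. emeasure (density (M i) (f i)) (A i))" .
  qed
qed


lemma finite_superarms: "finite (superarms N K)"
  unfolding superarms_def by (auto intro: finite_PiE)

lemma space_histM: "space (histM N K t) = PiE {..<t} (\<lambda>_. superarms N K \<times> space (PiM {..<N} (\<lambda>_. (borel :: real measure))))"
  unfolding histM_def by (simp add: space_PiM space_pair_measure)

lemma upd_meas:
  assumes A: "A \<in> superarms N K"
    and sR: "sets R = sets (PiM {..<N} (\<lambda>_. (borel :: real measure)))"
  shows "(\<lambda>(h, r). h(t := (A, r))) \<in> measurable (histM N K t \<Otimes>\<^sub>M R) (histM N K (Suc t))"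
proof -
  let ?C = "count_space (superarms N K) \<Otimes>\<^sub>M PiM {..<N} (\<lambda>_. (borel :: real measure))"
  have eq: "(\<lambda>(h, r). h(t := (A, r))) x = (\<lambda>i\<in>{..<Suc t}. if i = t then (A, snd x) else fst x i)"
    if x: "x \<in> space (histM N K t \<Otimes>\<^sub>M R)" for x
  proof -
    have "fst x \<in> space (histM N K t)" using x by (auto simp: space_pair_measure)
    then have "fst x \<in> extensional {..<t}" unfolding space_histM by (auto simp: PiE_def)
    then show ?thesis
      by (cases x) (auto simp: fun_eq_iff extensional_def)
  qed
  have "(\<lambda>x. \<lambda>i\<in>{..<Suc t}. if i = t then (A, snd x) else fst x i) \<in> measurable (histM N K t \<Otimes>\<^sub>M R) (PiM {..<Suc t} (\<lambda>_. ?C))"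
  proof (rule measurable_restrict)
    fix i assume i: "i \<in> {..<Suc t}"
    show "(\<lambda>x. if i = t then (A, snd x) else fst x i) \<in> measurable (histM N K t \<Otimes>\<^sub>M R) ?C"
    proof (cases "i = t")
      case True
      have s: "snd \<in> measurable (histM N K t \<Otimes>\<^sub>M R) (PiM {..<N} (\<lambda>_. (borel :: real measure)))"
        using measurable_snd[of "histM N K t" R] unfolding measurable_cong_sets[OF refl sR] .
      have "(\<lambda>x. (A, snd x)) \<in> measurable (histM N K t \<Otimes>\<^sub>M R) ?C"
        using A s by (intro measurable_Pair) auto
      then show ?thesis using True by simp
    next
      case False
      then have it: "i \<in> {..<t}" using i by auto
      have "(\<lambda>x. fst x i) \<in> measurable (histM N K t \<Otimes>\<^sub>M R) ?C"
        unfolding histM_def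
        by (rule measurable_compose[OF measurable_fst measurable_component_singleton[OF it]])
      then show ?thesis using False by simp
    qed
  qed
  then show ?thesis
    unfolding histM_def[of N K "Suc t"]
    by (rule measurable_cong[THEN iffD1, rotated]) (simp add: eq histM_def)
qed

lemma upd_space:
  assumes A: "A \<in> superarms N K" and h: "h \<in> space (histM N K t)"
    and r: "r \<in> space (reward_measure N Y noiseP A')"
  shows "h(t := (A, r)) \<in> space (histM N K (Suc t))"
proof -
  have "(h, r) \<in> space (histM N K t \<Otimes>\<^sub>M reward_measure N Y noiseP A')"
    using h r by (simp add: space_pair_measure)
  from measurable_space[OF upd_meas[OF A sets_RM] this] show ?thesis by simp
qed

lemma int_bounds:
  assumes "prob_space M" "g \<in> borel_measurable M" "\<And>x. x \<in> space M \<Longrightarrow> a \<le> g x \<and> g x \<le> (b::real)"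
  shows "integrable M g \<and> a \<le> (\<integral>x. g x \<partial>M) \<and> (\<integral>x. g x \<partial>M) \<le> b"
proof -
  interpret prob_space M by fact
  have ab: "\<bar>g x\<bar> \<le> \<bar>a\<bar> + \<bar>b\<bar>" if "x \<in> space M" for x
    using assms(3)[OF that] by linarith
  have int: "integrable M g"
    using assms(2) ab by (intro integrable_const_bound[where B="\<bar>a\<bar> + \<bar>b\<bar>"]) (auto intro!: AE_I2)
  have "(\<integral>x. a \<partial>M) \<le> (\<integral>x. g x \<partial>M)"
    using int assms(3) by (intro integral_mono) auto
  moreover have "(\<integral>x. g x \<partial>M) \<le> (\<integral>x. b \<partial>M)"
    using int assms(3) by (intro integral_mono) auto
  ultimately show ?thesis using int by (simp add: prob_space)
qed

primrec cnt :: "nat \<Rightarrow> nat \<Rightarrow> (nat \<Rightarrow> (nat \<Rightarrow> nat) \<Rightarrow> real) \<Rightarrow> policy \<Rightarrow> (nat \<Rightarrow> nat) \<Rightarrow> nat \<Rightarrow> nat \<Rightarrow> history \<Rightarrow> real" where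
  "cnt N K Y \<pi> B 0 t h = 0"
| "cnt N K Y \<pi> B (Suc k) t h = (\<Sum>A\<in>superarms N K. pmf (\<pi> t h) A *
      (of_bool (A = B) + (\<integral>r. cnt N K Y \<pi> B k (Suc t) (h(t := (A, r))) \<partial>reward_measure N Y noiseP A)))"

lemma pol_sum:
  assumes "admissible_policy N K \<pi>"
  shows "(\<Sum>A\<in>superarms N K. pmf (\<pi> t h) A) = 1"
  using assms finite_superarms by (intro sum_pmf_eq_1) (auto simp: admissible_policy_def)

lemma pol_meas:
  assumes "admissible_policy N K \<pi>"
  shows "(\<lambda>h. pmf (\<pi> t h) A) \<in> borel_measurable (histM N K t)"
  using assms by (auto simp: admissible_policy_def)

lemma comp_upd_meas:
  fixes g :: "history \<Rightarrow> real"
  assumes g: "g \<in> borel_measurable (histM N K (Suc t))" and A: "A \<in> superarms N K"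
  shows "(\<lambda>(h, r). g (h(t := (A, r)))) \<in> borel_measurable (histM N K t \<Otimes>\<^sub>M reward_measure N Y noiseP A')"
  using measurable_compose[OF upd_meas[OF A sets_RM] g] by (simp add: case_prod_beta')

lemma comp_upd_meas_r:
  fixes g :: "history \<Rightarrow> real"
  assumes g: "g \<in> borel_measurable (histM N K (Suc t))" and A: "A \<in> superarms N K"
    and h: "h \<in> space (histM N K t)"
  shows "(\<lambda>r. g (h(t := (A, r)))) \<in> borel_measurable (reward_measure N Y noiseP A')"
proof -
  have "(\<lambda>r. (h, r)) \<in> measurable (reward_measure N Y noiseP A') (histM N K t \<Otimes>\<^sub>M reward_measure N Y noiseP A')"
    using h by (intro measurable_Pair) auto
  from measurable_compose[OF this comp_upd_meas[OF g A]] show ?thesis by simp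
qed

lemma int_upd_meas:
  fixes g :: "history \<Rightarrow> real"
  assumes g: "g \<in> borel_measurable (histM N K (Suc t))" and A: "A \<in> superarms N K"
  shows "(\<lambda>h. \<integral>r. g (h(t := (A, r))) \<partial>reward_measure N Y noiseP A') \<in> borel_measurable (histM N K t)"
proof -
  have sf: "sigma_finite_measure (reward_measure N Y noiseP A')"
    using prob_RM by (rule prob_space_imp_sigma_finite)
  have "(\<lambda>(h, r). g (h(t := (A, r)))) \<in> borel_measurable (histM N K t \<Otimes>\<^sub>M reward_measure N Y noiseP A')"
    by (rule comp_upd_meas[OF g A])
  then show ?thesis
    using sigma_finite_measure.borel_measurable_lebesgue_integral[OF sf, where f="\<lambda>h r. g (h(t := (A, r)))" and N="histM N K t"]
    by simp
qed

lemma cnt_props: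
  assumes pol: "admissible_policy N K \<pi>"
  shows "(\<lambda>h. cnt N K Y \<pi> B k t h) \<in> borel_measurable (histM N K t) \<and>
         (\<forall>h\<in>space (histM N K t). 0 \<le> cnt N K Y \<pi> B k t h \<and> cnt N K Y \<pi> B k t h \<le> real k)"
proof (induction k arbitrary: t)
  case 0
  then show ?case by simp
next
  case (Suc k)
  have m: "(\<lambda>h. cnt N K Y \<pi> B k (Suc t) h) \<in> borel_measurable (histM N K (Suc t))"
    and b: "\<And>h. h \<in> space (histM N K (Suc t)) \<Longrightarrow> 0 \<le> cnt N K Y \<pi> B k (Suc t) h \<and> cnt N K Y \<pi> B k (Suc t) h \<le> real k"
    using Suc.IH[of "Suc t"] by auto
  have meas: "(\<lambda>h. cnt N K Y \<pi> B (Suc k) t h) \<in> borel_measurable (histM N K t)"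
    unfolding cnt.simps
    using int_upd_meas[OF m] pol_meas[OF pol]
    by (intro borel_measurable_sum borel_measurable_times borel_measurable_add) auto
  have bnd: "0 \<le> cnt N K Y \<pi> B (Suc k) t h \<and> cnt N K Y \<pi> B (Suc k) t h \<le> real (Suc k)"
    if h: "h \<in> space (histM N K t)" for h
  proof -
    have ib: "0 \<le> (\<integral>r. cnt N K Y \<pi> B k (Suc t) (h(t := (A, r))) \<partial>reward_measure N Y noiseP A) \<and>
              (\<integral>r. cnt N K Y \<pi> B k (Suc t) (h(t := (A, r))) \<partial>reward_measure N Y noiseP A) \<le> real k"
      if A: "A \<in> superarms N K" for A
      using int_bounds[OF prob_RM comp_upd_meas_r[OF m A h], where a=0 and b="real k"] b upd_space[OF A h]
      by auto
    let ?f = "\<lambda>A. of_bool (A = B) + (\<integral>r. cnt N K Y \<pi> B k (Suc t) (h(t := (A, r))) \<partial>reward_measure N Y noiseP A)"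
    have fA: "0 \<le> ?f A \<and> ?f A \<le> real (Suc k)" if "A \<in> superarms N K" for A
      using ib[OF that] by auto
    have "(\<Sum>A\<in>superarms N K. pmf (\<pi> t h) A * ?f A) \<le> (\<Sum>A\<in>superarms N K. pmf (\<pi> t h) A * real (Suc k))"
      using fA by (intro sum_mono mult_left_mono) auto
    also have "\<dots> = real (Suc k)"
      using pol_sum[OF pol] by (simp add: sum_distrib_right[symmetric])
    finally have "(\<Sum>A\<in>superarms N K. pmf (\<pi> t h) A * ?f A) \<le> real (Suc k)" .
    moreover have "0 \<le> (\<Sum>A\<in>superarms N K. pmf (\<pi> t h) A * ?f A)"
      using fA by (intro sum_nonneg mult_nonneg_nonneg) auto
    ultimately show ?thesis by simp
  qed
  show ?case using meas bnd by blast
qed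


definition YB :: "real \<Rightarrow> (nat \<Rightarrow> nat) \<Rightarrow> nat \<Rightarrow> (nat \<Rightarrow> nat) \<Rightarrow> real" where
  "YB \<Delta> B = (\<lambda>i A. 1/2 + (if A = B then \<Delta> else 0))"

lemma cnt_int:
  assumes pol: "admissible_policy N K \<pi>" and A: "A \<in> superarms N K" and h: "h \<in> space (histM N K t)"
  shows "integrable (reward_measure N Y' noiseP A') (\<lambda>r. cnt N K Y \<pi> B k (Suc t) (h(t := (A, r)))) \<and>
    0 \<le> (\<integral>r. cnt N K Y \<pi> B k (Suc t) (h(t := (A, r))) \<partial>reward_measure N Y' noiseP A') \<and>
    (\<integral>r. cnt N K Y \<pi> B k (Suc t) (h(t := (A, r))) \<partial>reward_measure N Y' noiseP A') \<le> real k"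
proof -
  have m: "(\<lambda>h. cnt N K Y \<pi> B k (Suc t) h) \<in> borel_measurable (histM N K (Suc t))"
    and b: "\<And>h. h \<in> space (histM N K (Suc t)) \<Longrightarrow> 0 \<le> cnt N K Y \<pi> B k (Suc t) h \<and> cnt N K Y \<pi> B k (Suc t) h \<le> real k"
    using cnt_props[OF pol] by auto
  show ?thesis
    using int_bounds[OF prob_RM comp_upd_meas_r[OF m A h], where a=0 and b="real k"] b upd_space[OF A h]
    by auto
qed

lemma exp_formula:
  assumes pol: "admissible_policy N K \<pi>" and N: "N \<ge> 1"
  shows "h \<in> space (histM N K t) \<Longrightarrow>
    exp_reward N K (YB \<Delta> B) noiseP \<pi> k t h = real k / 2 + \<Delta> * cnt N K (YB \<Delta> B) \<pi> B k t h"
proof (induction k arbitrary: t h)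
  case 0
  then show ?case by simp
next
  case (Suc k)
  note h = Suc.prems
  let ?R = "\<lambda>A. reward_measure N (YB \<Delta> B) noiseP A"
  let ?c = "\<lambda>A r. cnt N K (YB \<Delta> B) \<pi> B k (Suc t) (h(t := (A, r)))"
  have step: "(\<integral>r. (1 / real N) * (\<Sum>i<N. r i) + exp_reward N K (YB \<Delta> B) noiseP \<pi> k (Suc t) (h(t := (A, r))) \<partial>?R A)
      = 1/2 + (if A = B then \<Delta> else 0) + real k / 2 + \<Delta> * (\<integral>r. ?c A r \<partial>?R A)"
    if A: "A \<in> superarms N K" for A
  proof -
    interpret prob_space "?R A" by (rule prob_RM)
    have ci: "integrable (?R A) (?c A)" using cnt_int[OF pol A h, where Y'="YB \<Delta> B" and A'=A and Y="YB \<Delta> B" and B=B and k=k] by auto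
    have ri: "\<And>i. i < N \<Longrightarrow> integrable (?R A) (\<lambda>r. r i)" using RM_component by blast
    have rv: "\<And>i. i < N \<Longrightarrow> (\<integral>r. r i \<partial>?R A) = 1/2 + (if A = B then \<Delta> else 0)"
      using RM_component by (simp add: YB_def)
    have "(\<integral>r. (1 / real N) * (\<Sum>i<N. r i) + exp_reward N K (YB \<Delta> B) noiseP \<pi> k (Suc t) (h(t := (A, r))) \<partial>?R A)
        = (\<integral>r. (1 / real N) * (\<Sum>i<N. r i) + (real k / 2 + \<Delta> * ?c A r) \<partial>?R A)"
      using Suc.IH upd_space[OF A h, where Y="YB \<Delta> B" and A'=A] by (intro Bochner_Integration.integral_cong[OF refl]) auto
    also have "\<dots> = (1 / real N) * (\<Sum>i<N. (\<integral>r. r i \<partial>?R A)) + (real k / 2 + \<Delta> * (\<integral>r. ?c A r \<partial>?R A))"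
    proof -
      have i1: "integrable (?R A) (\<lambda>r. (\<Sum>i<N. r i))" using ri by auto
      have i2: "integrable (?R A) (\<lambda>r. real k / 2 + \<Delta> * ?c A r)" using ci by auto
      have "(\<integral>r. (1 / real N) * (\<Sum>i<N. r i) + (real k / 2 + \<Delta> * ?c A r) \<partial>?R A)
         = (\<integral>r. (1 / real N) * (\<Sum>i<N. r i) \<partial>?R A) + (\<integral>r. real k / 2 + \<Delta> * ?c A r \<partial>?R A)"
        using i1 i2 by (intro Bochner_Integration.integral_add) auto
      also have "(\<integral>r. (1 / real N) * (\<Sum>i<N. r i) \<partial>?R A) = (1 / real N) * (\<Sum>i<N. (\<integral>r. r i \<partial>?R A))"
        using ri by (simp add: Bochner_Integration.integral_sum)
      also have "(\<integral>r. real k / 2 + \<Delta> * ?c A r \<partial>?R A) = real k / 2 + \<Delta> * (\<integral>r. ?c A r \<partial>?R A)"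
        using ci by (simp add: prob_space)
      finally show ?thesis .
    qed
    also have "\<dots> = 1/2 + (if A = B then \<Delta> else 0) + real k / 2 + \<Delta> * (\<integral>r. ?c A r \<partial>?R A)"
      using rv N by simp
    finally show ?thesis .
  qed
  have "exp_reward N K (YB \<Delta> B) noiseP \<pi> (Suc k) t h
      = (\<Sum>A\<in>superarms N K. pmf (\<pi> t h) A * (1/2 + (if A = B then \<Delta> else 0) + real k / 2 + \<Delta> * (\<integral>r. ?c A r \<partial>?R A)))"
    using step by simp
  also have "\<dots> = (\<Sum>A\<in>superarms N K. pmf (\<pi> t h) A * ((1 + real k) / 2) + \<Delta> * (pmf (\<pi> t h) A * (of_bool (A = B) + (\<integral>r. ?c A r \<partial>?R A))))"
    by (intro sum.cong refl) (auto simp: algebra_simps)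
  also have "\<dots> = (\<Sum>A\<in>superarms N K. pmf (\<pi> t h) A * ((1 + real k) / 2)) + (\<Sum>A\<in>superarms N K. \<Delta> * (pmf (\<pi> t h) A * (of_bool (A = B) + (\<integral>r. ?c A r \<partial>?R A))))"
    by (rule sum.distrib)
  also have "\<dots> = (\<Sum>A\<in>superarms N K. pmf (\<pi> t h) A) * ((1 + real k) / 2) + \<Delta> * cnt N K (YB \<Delta> B) \<pi> B (Suc k) t h"
    by (simp only: cnt.simps sum_distrib_right sum_distrib_left)
  also have "\<dots> = real (Suc k) / 2 + \<Delta> * cnt N K (YB \<Delta> B) \<pi> B (Suc k) t h"
    using pol_sum[OF pol] by simp
  finally show ?case .
qed

lemma cnt_sum:
  assumes pol: "admissible_policy N K \<pi>"
  shows "h \<in> space (histM N K t) \<Longrightarrow> (\<Sum>B\<in>superarms N K. cnt N K Y \<pi> B k t h) = real k"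
proof (induction k arbitrary: t h)
  case 0
  then show ?case by simp
next
  case (Suc k)
  note h = Suc.prems
  let ?R = "\<lambda>A. reward_measure N Y noiseP A"
  have inner: "(\<Sum>B\<in>superarms N K. (\<integral>r. cnt N K Y \<pi> B k (Suc t) (h(t := (A, r))) \<partial>?R A)) = real k"
    if A: "A \<in> superarms N K" for A
  proof -
    interpret prob_space "?R A" by (rule prob_RM)
    have "(\<Sum>B\<in>superarms N K. (\<integral>r. cnt N K Y \<pi> B k (Suc t) (h(t := (A, r))) \<partial>?R A))
        = (\<integral>r. (\<Sum>B\<in>superarms N K. cnt N K Y \<pi> B k (Suc t) (h(t := (A, r)))) \<partial>?R A)"
    proof (rule Bochner_Integration.integral_sum[symmetric])
      fix B show "integrable (?R A) (\<lambda>r. cnt N K Y \<pi> B k (Suc t) (h(t := (A, r))))"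
        using cnt_int[OF pol A h, where Y'=Y and A'=A and Y=Y and B=B and k=k] by auto
    qed
    also have "\<dots> = (\<integral>r. real k \<partial>?R A)"
      using Suc.IH upd_space[OF A h, where Y=Y and A'=A] by (intro Bochner_Integration.integral_cong[OF refl]) auto
    finally show ?thesis by (simp add: prob_space)
  qed
  have "(\<Sum>B\<in>superarms N K. cnt N K Y \<pi> B (Suc k) t h)
     = (\<Sum>A\<in>superarms N K. pmf (\<pi> t h) A * ((\<Sum>B\<in>superarms N K. of_bool (A = B)) +
          (\<Sum>B\<in>superarms N K. (\<integral>r. cnt N K Y \<pi> B k (Suc t) (h(t := (A, r))) \<partial>?R A))))"
    unfolding cnt.simps
    by (subst sum.swap) (simp only: sum_distrib_left[symmetric] sum.distrib)
  also have "\<dots> = (\<Sum>A\<in>superarms N K. pmf (\<pi> t h) A * (1 + real k))"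
    using inner finite_superarms by (intro sum.cong refl) (simp add: sum.delta)
  also have "\<dots> = real (Suc k)"
    using pol_sum[OF pol] by (simp add: sum_distrib_right[symmetric])
  finally show ?case .
qed


definition kl :: "real \<Rightarrow> real \<Rightarrow> real" where
  "kl p q = p * ln (p / q) + (1 - p) * ln ((1 - p) / (1 - q))"

lemma ln_ge_1_minus_inv: "0 < x \<Longrightarrow> 1 - 1 / x \<le> ln (x::real)"
proof -
  assume x: "0 < x"
  have "ln (1 / x) \<le> 1 / x - 1" using x by (intro ln_le_minus_one) auto
  then show ?thesis using x by (simp add: ln_div)
qed

lemma kl_term_ge:
  assumes p: "0 < p" and q: "0 < q"
  shows "2 * p - 2 * sqrt (p * q) \<le> p * ln (p / q)"
proof -
  have "ln (sqrt (q / p)) \<le> sqrt (q / p) - 1"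
    using p q by (intro ln_le_minus_one) auto
  moreover have "ln (q / p) = 2 * ln (sqrt (q / p))"
    using p q by (simp add: ln_sqrt)
  moreover have "ln (p / q) = - ln (q / p)"
    using p q by (simp add: ln_div)
  moreover have "p * sqrt (q / p) = sqrt (p * q)"
    using p q by (simp add: real_sqrt_divide real_sqrt_mult field_simps)
  ultimately have "p * ln (p / q) \<ge> p * (- 2 * (sqrt (q / p) - 1))"
    using p by (intro mult_left_mono) auto
  then show ?thesis using \<open>p * sqrt (q / p) = sqrt (p * q)\<close> by (simp add: algebra_simps)
qed

lemma kl_pinsker:
  assumes p: "0 < p" "p < 1" and q: "0 < q" "q < 1"
  shows "(p - q)\<^sup>2 / 4 \<le> kl p q"
proof -
  have 1: "2 * p - 2 * sqrt (p * q) \<le> p * ln (p / q)" using kl_term_ge p q by auto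
  have 2: "2 * (1 - p) - 2 * sqrt ((1 - p) * (1 - q)) \<le> (1 - p) * ln ((1 - p) / (1 - q))"
    using kl_term_ge[of "1 - p" "1 - q"] p q by auto
  have sp: "sqrt p * sqrt p = p" "sqrt q * sqrt q = q" using p q by auto
  have sp1: "sqrt (1 - p) * sqrt (1 - p) = 1 - p" "sqrt (1 - q) * sqrt (1 - q) = 1 - q" using p q by auto
  have e: "(p - q)\<^sup>2 = (sqrt p - sqrt q)\<^sup>2 * (sqrt p + sqrt q)\<^sup>2"
  proof -
    have "(sqrt p - sqrt q) * (sqrt p + sqrt q) = sqrt p * sqrt p - sqrt q * sqrt q"
      by (simp add: algebra_simps)
    then have "(sqrt p - sqrt q) * (sqrt p + sqrt q) = p - q" using sp by simp
    then show ?thesis by (metis power_mult_distrib)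
  qed
  have s4: "(sqrt p + sqrt q)\<^sup>2 \<le> 2\<^sup>2"
  proof (rule power_mono)
    have "sqrt p \<le> 1" "sqrt q \<le> 1" using p q by auto
    then show "sqrt p + sqrt q \<le> 2" by linarith
    show "0 \<le> sqrt p + sqrt q" using p q by simp
  qed
  have "(sqrt p - sqrt q)\<^sup>2 * (sqrt p + sqrt q)\<^sup>2 \<le> (sqrt p - sqrt q)\<^sup>2 * 2\<^sup>2"
    using s4 by (intro mult_left_mono) auto
  then have "(p - q)\<^sup>2 \<le> (sqrt p - sqrt q)\<^sup>2 * 4" using e by simp
  then have a: "(p - q)\<^sup>2 / 4 \<le> (sqrt p - sqrt q)\<^sup>2" by simp
  have b1: "(sqrt p - sqrt q)\<^sup>2 = p + q - 2 * sqrt (p * q)"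
    using p q by (simp add: power2_diff real_sqrt_mult)
  have b2: "(sqrt (1 - p) - sqrt (1 - q))\<^sup>2 = (1 - p) + (1 - q) - 2 * sqrt ((1 - p) * (1 - q))"
    using p q by (simp add: power2_diff real_sqrt_mult)
  have b: "(sqrt p - sqrt q)\<^sup>2 + (sqrt (1 - p) - sqrt (1 - q))\<^sup>2 = 2 - 2 * sqrt (p * q) - 2 * sqrt ((1 - p) * (1 - q))"
    using b1 b2 by linarith
  have "0 \<le> (sqrt (1 - p) - sqrt (1 - q))\<^sup>2" by simp
  with a b 1 2 show ?thesis unfolding kl_def by argo
qed

lemma kl_bound:
  assumes "1/3 \<le> u" "u \<le> 2/3" "1/3 \<le> v" "v \<le> 2/3"
  shows "\<bar>kl u v\<bar> \<le> 2"
proof -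
  have l1: "\<bar>ln x\<bar> \<le> 1" if "1/2 \<le> x" "x \<le> 2" for x :: real
  proof -
    have "ln x \<le> x - 1" using that by (intro ln_le_minus_one) auto
    moreover have "1 - 1 / x \<le> ln x" using that by (intro ln_ge_1_minus_inv) auto
    moreover have "1 / x \<le> 2" using that by (simp add: field_simps)
    ultimately show ?thesis using that by auto
  qed
  have "\<bar>ln (u / v)\<bar> \<le> 1" using assms by (intro l1) (auto simp: field_simps)
  moreover have "\<bar>ln ((1 - u) / (1 - v))\<bar> \<le> 1" using assms by (intro l1) (auto simp: field_simps)
  ultimately have "\<bar>u * ln (u / v)\<bar> \<le> 1" "\<bar>(1 - u) * ln ((1 - u) / (1 - v))\<bar> \<le> 1"
    using assms by (auto simp: abs_mult intro!: mult_le_one)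
  then show ?thesis unfolding kl_def by linarith
qed

lemma ls_point:
  assumes u: "0 < u" "u < 1" and v: "0 < v" "v < 1" and l: "0 < l"
    and a: "0 < a" "a < 1" and b: "0 < b" "b < 1"
  shows "(ln (b / a) - ln ((1 - b) / (1 - a))) * u + (ln ((1 - b) / (1 - a)) + 1)
         + ((1 - b) / (1 - a) - b / a) * (l * v) - ((1 - b) / (1 - a)) * l
       \<le> kl u v - ln l"
proof -
  have 1: "u * (1 - 1 / ((u * a) / (v * l * b))) \<le> u * ln ((u * a) / (v * l * b))"
    using u v l a b by (intro mult_left_mono ln_ge_1_minus_inv) auto
  have 2: "(1 - u) * (1 - 1 / (((1 - u) * (1 - a)) / ((1 - v) * l * (1 - b))))
       \<le> (1 - u) * ln (((1 - u) * (1 - a)) / ((1 - v) * l * (1 - b)))"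
    using u v l a b by (intro mult_left_mono ln_ge_1_minus_inv) auto
  have e1: "ln ((u * a) / (v * l * b)) = ln (u / v) - ln l - ln (b / a)"
    using u v l a b by (simp add: ln_div ln_mult)
  have e2: "ln (((1 - u) * (1 - a)) / ((1 - v) * l * (1 - b))) = ln ((1 - u) / (1 - v)) - ln l - ln ((1 - b) / (1 - a))"
    using u v l a b by (simp add: ln_div ln_mult)
  have gen: "x * (1 - 1 / ((x * w) / (y * m * z))) = x - y * m * z / w"
    if "0 < x" "0 < y" "0 < m" "0 < z" "0 < w" for x y m z w :: real
    using that by (simp add: field_simps)
  have f1: "u * (1 - 1 / ((u * a) / (v * l * b))) = u - v * l * b / a"
    using u v l a b by (intro gen) auto
  have f2: "(1 - u) * (1 - 1 / (((1 - u) * (1 - a)) / ((1 - v) * l * (1 - b)))) = (1 - u) - (1 - v) * l * (1 - b) / (1 - a)"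
    using u v l a b by (intro gen) auto
  have H0: "u - v * l * b / a + ((1 - u) - (1 - v) * l * (1 - b) / (1 - a))
      \<le> u * (ln (u / v) - ln l - ln (b / a)) + (1 - u) * (ln ((1 - u) / (1 - v)) - ln l - ln ((1 - b) / (1 - a)))"
    using 1 2 unfolding e1 e2 f1 f2 by linarith
  have r1: "v * l * b / a = (b / a) * (l * v)" by simp
  have r2: "(1 - v) * l * (1 - b) / (1 - a) = ((1 - b) / (1 - a)) * l - ((1 - b) / (1 - a)) * (l * v)"
  proof -
    have g: "(1 - v) * l * z = z * l - z * (l * v)" for z :: real by (simp add: algebra_simps)
    have "(1 - v) * l * (1 - b) / (1 - a) = (1 - v) * l * ((1 - b) / (1 - a))" by simp
    then show ?thesis using g[of "(1 - b) / (1 - a)"] by (simp only:)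
  qed
  have H: "u - (b / a) * (l * v) + ((1 - u) - (((1 - b) / (1 - a)) * l - ((1 - b) / (1 - a)) * (l * v)))
      \<le> u * (ln (u / v) - ln l - ln (b / a)) + (1 - u) * (ln ((1 - u) / (1 - v)) - ln l - ln ((1 - b) / (1 - a)))"
    using H0 unfolding r1 r2 .
  have alg: "(P - Q) * u + (Q + 1) + (c2 - c1) * lv - c2 * l \<le> u * R + (1 - u) * S - L"
    if "u - c1 * lv + ((1 - u) - (c2 * l - c2 * lv)) \<le> u * (R - L - P) + (1 - u) * (S - L - Q)"
    for P Q R S L c1 c2 lv :: real
  proof -
    have "u * (R - L - P) + (1 - u) * (S - L - Q) - (u - c1 * lv + ((1 - u) - (c2 * l - c2 * lv)))
        = (u * R + (1 - u) * S - L) - ((P - Q) * u + (Q + 1) + (c2 - c1) * lv - c2 * l)"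
      by (simp add: algebra_simps)
    then show ?thesis using that by linarith
  qed
  show ?thesis unfolding kl_def
    using alg[OF H] .
qed


lemma kl_integrable:
  assumes P: "prob_space M" and um: "u \<in> borel_measurable M" and vm: "v \<in> borel_measurable M"
    and b: "\<And>x. x \<in> space M \<Longrightarrow> 1/3 \<le> u x \<and> u x \<le> 2/3 \<and> 1/3 \<le> v x \<and> v x \<le> 2/3"
  shows "integrable M (\<lambda>x. kl (u x) (v x))"
proof -
  interpret prob_space M by fact
  note um[measurable] vm[measurable]
  have m: "(\<lambda>x. kl (u x) (v x)) \<in> borel_measurable M"
    unfolding kl_def by measurable
  show ?thesis
    using b kl_bound by (intro integrable_const_bound[where B=2] m) (auto intro!: AE_I2)
qed

lemma conv_bounds:
  assumes "finite S" "\<And>A. A \<in> S \<Longrightarrow> 0 \<le> w A" "sum w S = 1"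
    "\<And>A. A \<in> S \<Longrightarrow> lo \<le> x A \<and> x A \<le> (hi::real)"
  shows "lo \<le> (\<Sum>A\<in>S. w A * x A) \<and> (\<Sum>A\<in>S. w A * x A) \<le> hi"
proof -
  have "(\<Sum>A\<in>S. w A * lo) \<le> (\<Sum>A\<in>S. w A * x A)"
    using assms by (intro sum_mono mult_left_mono) auto
  moreover have "(\<Sum>A\<in>S. w A * x A) \<le> (\<Sum>A\<in>S. w A * hi)"
    using assms by (intro sum_mono mult_left_mono) auto
  ultimately show ?thesis using assms(3) by (simp add: sum_distrib_right[symmetric])
qed

lemma kl_step:
  fixes S :: "'a set" and w :: "'a \<Rightarrow> real" and Q :: "'a \<Rightarrow> 'b measure"
    and L :: "'b \<Rightarrow> real" and u v :: "'a \<Rightarrow> 'b \<Rightarrow> real"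
  assumes S: "finite S" "B \<in> S"
    and w: "\<And>A. A \<in> S \<Longrightarrow> 0 \<le> w A" "sum w S = 1"
    and Q: "\<And>A. A \<in> S \<Longrightarrow> prob_space (Q A)"
    and um: "\<And>A. A \<in> S \<Longrightarrow> u A \<in> borel_measurable (Q A)"
    and vm: "\<And>A. A \<in> S \<Longrightarrow> v A \<in> borel_measurable (Q A)"
    and uvb: "\<And>A x. A \<in> S \<Longrightarrow> x \<in> space (Q A) \<Longrightarrow> 1/3 \<le> u A x \<and> u A x \<le> 2/3 \<and> 1/3 \<le> v A x \<and> v A x \<le> 2/3"
    and Lm: "L \<in> borel_measurable (Q B)" and Lpos: "\<And>x. x \<in> space (Q B) \<Longrightarrow> 0 < L x"
    and Li: "integrable (Q B) L" and L1: "(\<integral>x. L x \<partial>Q B) = 1"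
    and lnLi: "integrable (Q B) (\<lambda>x. ln (L x))"
  shows "kl (\<Sum>A\<in>S. w A * (\<integral>x. u A x \<partial>Q A))
            (\<Sum>A\<in>S. w A * (\<integral>x. (if A = B then L x else 1) * v A x \<partial>Q A))
         \<le> (\<Sum>A\<in>S. w A * (\<integral>x. kl (u A x) (v A x) \<partial>Q A)) - w B * (\<integral>x. ln (L x) \<partial>Q B)"
proof -
  define l where "l = (\<lambda>A x. if A = B then L x else 1)"
  define b where "b = (\<Sum>A\<in>S. w A * (\<integral>x. u A x \<partial>Q A))"
  define a where "a = (\<Sum>A\<in>S. w A * (\<integral>x. l A x * v A x \<partial>Q A))"
  have lm: "l A \<in> borel_measurable (Q A)" if "A \<in> S" for A
    using Lm by (cases "A = B") (auto simp: l_def)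
  have lpos: "0 < l A x" if "A \<in> S" "x \<in> space (Q A)" for A x
    using Lpos that by (cases "A = B") (auto simp: l_def)
  have li: "integrable (Q A) (l A)" if "A \<in> S" for A
  proof (cases "A = B")
    case True then show ?thesis using Li by (simp add: l_def)
  next
    case False
    interpret prob_space "Q A" using Q that by blast
    show ?thesis using False by (simp add: l_def)
  qed
  have l1: "(\<integral>x. l A x \<partial>Q A) = 1" if "A \<in> S" for A
  proof (cases "A = B")
    case True then show ?thesis using L1 by (simp add: l_def)
  next
    case False
    interpret prob_space "Q A" using Q that by blast
    show ?thesis using False by (simp add: l_def prob_space)
  qed
  have ui: "integrable (Q A) (u A)" and ub: "1/3 \<le> (\<integral>x. u A x \<partial>Q A) \<and> (\<integral>x. u A x \<partial>Q A) \<le> 2/3"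
    if "A \<in> S" for A
    using int_bounds[OF Q[OF that] um[OF that], where a="1/3" and b="2/3"] uvb[OF that] by auto
  have lvi: "integrable (Q A) (\<lambda>x. l A x * v A x)" if "A \<in> S" for A
  proof (rule Bochner_Integration.integrable_bound[OF li[OF that]])
    show "(\<lambda>x. l A x * v A x) \<in> borel_measurable (Q A)" using lm[OF that] vm[OF that] by simp
    show "AE x in Q A. norm (l A x * v A x) \<le> norm (l A x)"
    proof (intro AE_I2)
      fix x assume x: "x \<in> space (Q A)"
      have "0 < v A x" "v A x \<le> 1" using uvb[OF that x] by auto
      then show "norm (l A x * v A x) \<le> norm (l A x)"
        using lpos[OF that x] by (simp add: abs_mult mult_left_le)
    qed
  qed
  have lvb: "1/3 \<le> (\<integral>x. l A x * v A x \<partial>Q A) \<and> (\<integral>x. l A x * v A x \<partial>Q A) \<le> 2/3" if "A \<in> S" for A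
  proof -
    have "(\<integral>x. l A x * (1/3) \<partial>Q A) \<le> (\<integral>x. l A x * v A x \<partial>Q A)"
      using li[OF that] lvi[OF that] uvb[OF that] lpos[OF that]
      by (intro integral_mono) (auto intro!: mult_left_mono)
    moreover have "(\<integral>x. l A x * v A x \<partial>Q A) \<le> (\<integral>x. l A x * (2/3) \<partial>Q A)"
      using li[OF that] lvi[OF that] uvb[OF that] lpos[OF that]
      by (intro integral_mono) (auto intro!: mult_left_mono)
    ultimately show ?thesis using l1[OF that] by simp
  qed
  have bb: "1/3 \<le> b \<and> b \<le> 2/3" unfolding b_def
    using ub by (intro conv_bounds S w) auto
  have ab: "1/3 \<le> a \<and> a \<le> 2/3" unfolding a_def
    using lvb by (intro conv_bounds S w) auto
  define c1 where "c1 = ln (b / a) - ln ((1 - b) / (1 - a))"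
  define c2 where "c2 = ln ((1 - b) / (1 - a)) + 1"
  define c3 where "c3 = (1 - b) / (1 - a) - b / a"
  define c4 where "c4 = (1 - b) / (1 - a)"
  define H where "H A x = c1 * u A x + c2 + c3 * (l A x * v A x) - c4 * l A x" for A x
  define G where "G A x = kl (u A x) (v A x) - ln (l A x)" for A x
  have kli: "integrable (Q A) (\<lambda>x. kl (u A x) (v A x))" if "A \<in> S" for A
    using kl_integrable[OF Q[OF that] um[OF that] vm[OF that]] uvb[OF that] by auto
  have lnli: "integrable (Q A) (\<lambda>x. ln (l A x))" if "A \<in> S" for A
  proof (cases "A = B")
    case True then show ?thesis using lnLi by (simp add: l_def)
  next
    case False then show ?thesis by (simp add: l_def)
  qed
  have lnl: "(\<integral>x. ln (l A x) \<partial>Q A) = (if A = B then (\<integral>x. ln (L x) \<partial>Q B) else 0)" for A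
    by (simp add: l_def)
  have HG: "(\<integral>x. H A x \<partial>Q A) \<le> (\<integral>x. G A x \<partial>Q A)" if "A \<in> S" for A
  proof (rule integral_mono)
    show "integrable (Q A) (H A)"
    proof -
      interpret prob_space "Q A" using Q that by blast
      show ?thesis unfolding H_def
        using ui[OF that] lvi[OF that] li[OF that] by auto
    qed
    show "integrable (Q A) (G A)" unfolding G_def
      using kli[OF that] lnli[OF that] by auto
    fix x assume x: "x \<in> space (Q A)"
    show "H A x \<le> G A x" unfolding H_def G_def c1_def c2_def c3_def c4_def
      using ls_point[of "u A x" "v A x" "l A x" a b] uvb[OF that x] lpos[OF that x] ab bb by auto
  qed
  have intH: "(\<integral>x. H A x \<partial>Q A) = c1 * (\<integral>x. u A x \<partial>Q A) + c2 + c3 * (\<integral>x. l A x * v A x \<partial>Q A) - c4"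
    if "A \<in> S" for A
  proof -
    interpret prob_space "Q A" using Q that by blast
    show ?thesis unfolding H_def
      using ui[OF that] lvi[OF that] li[OF that] l1[OF that] by (simp add: prob_space)
  qed
  have intG: "(\<integral>x. G A x \<partial>Q A) = (\<integral>x. kl (u A x) (v A x) \<partial>Q A) - (if A = B then (\<integral>x. ln (L x) \<partial>Q B) else 0)"
    if "A \<in> S" for A
    unfolding G_def using kli[OF that] lnli[OF that] lnl[of A] by simp
  have "(\<Sum>A\<in>S. w A * (\<integral>x. H A x \<partial>Q A)) \<le> (\<Sum>A\<in>S. w A * (\<integral>x. G A x \<partial>Q A))"
    using HG w by (intro sum_mono mult_left_mono) auto
  moreover have "(\<Sum>A\<in>S. w A * (\<integral>x. H A x \<partial>Q A)) = c1 * b + c2 + c3 * a - c4"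
  proof -
    have "(\<Sum>A\<in>S. w A * (\<integral>x. H A x \<partial>Q A))
        = (\<Sum>A\<in>S. c1 * (w A * (\<integral>x. u A x \<partial>Q A)) + (c2 - c4) * w A + c3 * (w A * (\<integral>x. l A x * v A x \<partial>Q A)))"
    proof (intro sum.cong refl)
      fix A assume A: "A \<in> S"
      show "w A * (\<integral>x. H A x \<partial>Q A) = c1 * (w A * (\<integral>x. u A x \<partial>Q A)) + (c2 - c4) * w A + c3 * (w A * (\<integral>x. l A x * v A x \<partial>Q A))"
        unfolding intH[OF A] by (simp add: algebra_simps)
    qed
    also have "\<dots> = c1 * b + (c2 - c4) * sum w S + c3 * a"
      unfolding a_def b_def by (simp add: sum.distrib sum_distrib_left)
    finally show ?thesis using w(2) by simp
  qed
  moreover have "(\<Sum>A\<in>S. w A * (\<integral>x. G A x \<partial>Q A)) = (\<Sum>A\<in>S. w A * (\<integral>x. kl (u A x) (v A x) \<partial>Q A)) - w B * (\<integral>x. ln (L x) \<partial>Q B)"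
  proof -
    have "(\<Sum>A\<in>S. w A * (\<integral>x. G A x \<partial>Q A))
        = (\<Sum>A\<in>S. w A * (\<integral>x. kl (u A x) (v A x) \<partial>Q A) - (if A = B then w A * (\<integral>x. ln (L x) \<partial>Q B) else 0))"
    proof (intro sum.cong refl)
      fix A assume A: "A \<in> S"
      show "w A * (\<integral>x. G A x \<partial>Q A) = w A * (\<integral>x. kl (u A x) (v A x) \<partial>Q A) - (if A = B then w A * (\<integral>x. ln (L x) \<partial>Q B) else 0)"
        unfolding intG[OF A] by (simp add: algebra_simps)
    qed
    also have "\<dots> = (\<Sum>A\<in>S. w A * (\<integral>x. kl (u A x) (v A x) \<partial>Q A)) - w B * (\<integral>x. ln (L x) \<partial>Q B)"
      using S by (simp add: sum_subtractf sum.delta)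
    finally show ?thesis .
  qed
  moreover have "c1 * b + c2 + c3 * a - c4 = kl b a"
  proof -
    have a0: "a \<noteq> 0" "1 - a \<noteq> 0" using ab by auto
    have e0: "c3 * a - c4 = ((1 - b) / (1 - a) * a - (1 - b) / (1 - a)) - (b / a) * a"
      unfolding c3_def c4_def by (simp add: algebra_simps)
    have g: "z * a - z = z * (- (1 - a))" for z :: real by (simp add: algebra_simps)
    have e1: "(1 - b) / (1 - a) * a - (1 - b) / (1 - a) = (1 - b) / (1 - a) * (- (1 - a))"
      by (rule g)
    have e2': "(1 - b) / (1 - a) * (1 - a) = 1 - b" using a0(2) by simp
    have e2: "(1 - b) / (1 - a) * (- (1 - a)) = - (1 - b)" by (simp only: mult_minus_right e2')
    have e3: "(b / a) * a = b" using a0 by simp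
    have "c3 * a - c4 = -1" using e0 e1 e2 e3 by simp
    moreover have "c1 * b + c2 = kl b a + 1"
      unfolding c1_def c2_def kl_def by (simp add: algebra_simps)
    ultimately show ?thesis by simp
  qed
  ultimately have "kl b a \<le> (\<Sum>A\<in>S. w A * (\<integral>x. kl (u A x) (v A x) \<partial>Q A)) - w B * (\<integral>x. ln (L x) \<partial>Q B)"
    by linarith
  then show ?thesis unfolding a_def b_def l_def .
qed


definition Lf :: "nat \<Rightarrow> real \<Rightarrow> (nat \<Rightarrow> real) \<Rightarrow> real" where
  "Lf N \<Delta> r = exp (\<Sum>i<N. (\<Delta> * (r i - 1/2) - \<Delta>\<^sup>2 / 2))"

lemma RM_other:
  assumes "A \<noteq> B"
  shows "reward_measure N (YB \<Delta> B) noiseP A = reward_measure N (YB 0 B) noiseP A"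
  using assms unfolding reward_measure_def YB_def by simp

lemma RM_B:
  "reward_measure N (YB \<Delta> B) noiseP B = density (reward_measure N (YB 0 B) noiseP B) (\<lambda>r. ennreal (Lf N \<Delta> r))"
proof -
  let ?M = "\<lambda>i::nat. distr noiseP borel (\<lambda>x. 1/2 + x)"
  have e1: "reward_measure N (YB \<Delta> B) noiseP B = PiM {..<N} (\<lambda>i. density (?M i) (lratio (1/2) \<Delta>))"
    unfolding reward_measure_def YB_def using shift_density[of "1/2" \<Delta>] by simp
  have e2: "reward_measure N (YB 0 B) noiseP B = PiM {..<N} ?M"
    unfolding reward_measure_def YB_def by simp
  have pd: "PiM {..<N} (\<lambda>i. density (?M i) (lratio (1/2) \<Delta>)) = density (PiM {..<N} ?M) (\<lambda>r. ennreal (\<Prod>i\<in>{..<N}. lratio (1/2) \<Delta> (r i)))"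
  proof (rule PiM_density)
    show "finite {..<N}" by simp
    show "prob_space (?M i)" for i by (rule prob_shift)
    show "prob_space (density (?M i) (lratio (1/2) \<Delta>))" for i
      using prob_shift[of "1/2 + \<Delta>"] shift_density[of "1/2" \<Delta>] by simp
    show "lratio (1/2) \<Delta> \<in> borel_measurable (?M i)" for i
      unfolding lratio_def by simp
    show "0 \<le> lratio (1/2) \<Delta> x" for x unfolding lratio_def by simp
  qed
  have "(\<Prod>i\<in>{..<N}. lratio (1/2) \<Delta> (r i)) = Lf N \<Delta> r" for r
    unfolding Lf_def lratio_def by (simp add: exp_sum)
  then show ?thesis using e1 e2 pd by simp
qed

lemma Lf_facts:
  shows "Lf N \<Delta> \<in> borel_measurable (reward_measure N (YB 0 B) noiseP B)"
    and "\<And>r. 0 < Lf N \<Delta> r"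
    and "integrable (reward_measure N (YB 0 B) noiseP B) (Lf N \<Delta>)"
    and "(\<integral>r. Lf N \<Delta> r \<partial>reward_measure N (YB 0 B) noiseP B) = 1"
    and "integrable (reward_measure N (YB 0 B) noiseP B) (\<lambda>r. ln (Lf N \<Delta> r))"
    and "(\<integral>r. ln (Lf N \<Delta> r) \<partial>reward_measure N (YB 0 B) noiseP B) = - (real N * \<Delta>\<^sup>2 / 2)"
proof -
  let ?R = "reward_measure N (YB 0 B) noiseP B"
  interpret prob_space ?R by (rule prob_RM)
  have ri: "\<And>i. i < N \<Longrightarrow> integrable ?R (\<lambda>r. r i)" and rv: "\<And>i. i < N \<Longrightarrow> (\<integral>r. r i \<partial>?R) = 1/2"
    using RM_component[of _ N "YB 0 B" B] by (auto simp: YB_def)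
  have cm: "(\<lambda>r. r i) \<in> borel_measurable ?R" if "i < N" for i
    using ri[OF that] by (rule borel_measurable_integrable)
  have "(\<lambda>r. exp (\<Sum>i<N. (\<Delta> * (r i - 1/2) - \<Delta>\<^sup>2 / 2))) \<in> borel_measurable (PiM {..<N} (\<lambda>_. (borel :: real measure)))"
    by measurable
  then show m: "Lf N \<Delta> \<in> borel_measurable ?R"
    unfolding Lf_def measurable_cong_sets[OF sets_RM refl] .
  show "\<And>r. 0 < Lf N \<Delta> r" unfolding Lf_def by simp
  have ln_eq: "ln (Lf N \<Delta> r) = (\<Sum>i<N. (\<Delta> * (r i - 1/2) - \<Delta>\<^sup>2 / 2))" for r
    unfolding Lf_def by simp
  show "integrable ?R (\<lambda>r. ln (Lf N \<Delta> r))"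
    unfolding ln_eq using ri by (intro Bochner_Integration.integrable_sum) auto
  have "(\<integral>r. ln (Lf N \<Delta> r) \<partial>?R) = (\<Sum>i<N. (\<integral>r. \<Delta> * (r i - 1/2) - \<Delta>\<^sup>2 / 2 \<partial>?R))"
    unfolding ln_eq using ri by (intro Bochner_Integration.integral_sum) auto
  also have "\<dots> = (\<Sum>i<N. - (\<Delta>\<^sup>2 / 2))"
    using ri rv by (intro sum.cong refl) (simp add: prob_space)
  finally show "(\<integral>r. ln (Lf N \<Delta> r) \<partial>?R) = - (real N * \<Delta>\<^sup>2 / 2)" by simp
  have "prob_space (density ?R (\<lambda>r. ennreal (Lf N \<Delta> r)))"
    using prob_RM[of N "YB \<Delta> B" B] RM_B[of N \<Delta> B] by simp
  then have "emeasure (density ?R (\<lambda>r. ennreal (Lf N \<Delta> r))) (space ?R) = 1"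
    using prob_space.emeasure_space_1 by fastforce
  then have nn: "(\<integral>\<^sup>+r. ennreal (Lf N \<Delta> r) \<partial>?R) = ennreal 1"
    using m by (simp add: emeasure_density nn_integral_set_ennreal[symmetric] cong: nn_integral_cong)
  have ae: "AE r in ?R. 0 \<le> Lf N \<Delta> r" by (intro AE_I2) (simp add: Lf_def)
  show i: "integrable ?R (Lf N \<Delta>)"
    by (rule integrableI_nn_integral_finite[OF m ae nn])
  have "ennreal (\<integral>r. Lf N \<Delta> r \<partial>?R) = ennreal 1"
    using nn_integral_eq_integral[OF i ae] nn by simp
  then show "(\<integral>r. Lf N \<Delta> r \<partial>?R) = 1"
    using integral_nonneg_AE[OF ae] by simp
qed

lemma int_RM_B:
  assumes "g \<in> borel_measurable (reward_measure N (YB 0 B) noiseP B)"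
  shows "(\<integral>r. g r \<partial>reward_measure N (YB \<Delta> B) noiseP B) = (\<integral>r. Lf N \<Delta> r * g r \<partial>reward_measure N (YB 0 B) noiseP B)"
proof -
  have "(\<integral>r. g r \<partial>density (reward_measure N (YB 0 B) noiseP B) (\<lambda>r. ennreal (Lf N \<Delta> r)))
      = (\<integral>r. Lf N \<Delta> r *\<^sub>R g r \<partial>reward_measure N (YB 0 B) noiseP B)"
  proof (rule integral_density)
    show "g \<in> borel_measurable (reward_measure N (YB 0 B) noiseP B)" by (rule assms)
    show "Lf N \<Delta> \<in> borel_measurable (reward_measure N (YB 0 B) noiseP B)" by (rule Lf_facts(1))
    show "AE x in reward_measure N (YB 0 B) noiseP B. 0 \<le> Lf N \<Delta> x"
      using Lf_facts(2)[of N \<Delta>] by (intro AE_I2) (simp add: less_imp_le)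
  qed
  then show ?thesis unfolding RM_B[of N \<Delta> B] by simp
qed


definition phi :: "nat \<Rightarrow> real \<Rightarrow> real" where
  "phi T x = 1/3 + x / (3 * real T)"

lemma phi_int:
  assumes "prob_space M" "integrable M f"
  shows "(\<integral>x. phi T (c + f x) \<partial>M) = phi T (c + (\<integral>x. f x \<partial>M))"
proof -
  interpret prob_space M by fact
  have "(\<integral>x. phi T (c + f x) \<partial>M) = (\<integral>x. (1/3 + c / (3 * real T)) + f x / (3 * real T) \<partial>M)"
    unfolding phi_def by (simp add: add_divide_distrib add.assoc)
  also have "\<dots> = (1/3 + c / (3 * real T)) + (\<integral>x. f x \<partial>M) / (3 * real T)"
    using assms(2) by (simp add: prob_space)
  finally show ?thesis unfolding phi_def by (simp add: add_divide_distrib add.assoc)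
qed

lemma phi_sum:
  assumes "sum w S = 1"
  shows "(\<Sum>A\<in>S. w A * phi T (c + x A)) = phi T (c + (\<Sum>A\<in>S. w A * x A))"
proof -
  have "(\<Sum>A\<in>S. w A * phi T (c + x A)) = (\<Sum>A\<in>S. w A * (1/3 + c / (3 * real T)) + (w A * x A) / (3 * real T))"
    unfolding phi_def by (intro sum.cong refl) (simp add: add_divide_distrib algebra_simps)
  also have "\<dots> = (\<Sum>A\<in>S. w A) * (1/3 + c / (3 * real T)) + (\<Sum>A\<in>S. w A * x A) / (3 * real T)"
    by (simp add: sum.distrib sum_distrib_right sum_divide_distrib)
  finally show ?thesis using assms unfolding phi_def by (simp add: add_divide_distrib)
qed

lemma phi_bounds: "0 < T \<Longrightarrow> 0 \<le> x \<Longrightarrow> x \<le> real T \<Longrightarrow> 1/3 \<le> phi T x \<and> phi T x \<le> 2/3"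
  unfolding phi_def by (auto simp: field_simps)

lemma kl_same: "kl x x = 0"
  unfolding kl_def by (cases "x = 0"; cases "x = 1") auto


lemma kl_rec:
  assumes pol: "admissible_policy N K \<pi>" and T: "0 < T" and B: "B \<in> superarms N K"
  shows "h \<in> space (histM N K t) \<Longrightarrow> 0 \<le> c \<Longrightarrow> c + real k \<le> real T \<Longrightarrow>
    kl (phi T (c + cnt N K (YB 0 B) \<pi> B k t h)) (phi T (c + cnt N K (YB \<Delta> B) \<pi> B k t h))
      \<le> (real N * \<Delta>\<^sup>2 / 2) * cnt N K (YB 0 B) \<pi> B k t h"
proof (induction k arbitrary: t h c)
  case 0
  then show ?case by (simp add: kl_same)
next
  case (Suc k)
  note h = Suc.prems(1) and c0 = Suc.prems(2) and cT = Suc.prems(3)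
  define S where "S = superarms N K"
  define w where "w A = pmf (\<pi> t h) A" for A
  define Q where "Q A = reward_measure N (YB 0 B) noiseP A" for A
  define QD where "QD A = reward_measure N (YB \<Delta> B) noiseP A" for A
  define m' where "m' = (\<lambda>A r. cnt N K (YB 0 B) \<pi> B k (Suc t) (h(t := (A, r))))"
  define n' where "n' = (\<lambda>A r. cnt N K (YB \<Delta> B) \<pi> B k (Suc t) (h(t := (A, r))))"
  define u where "u = (\<lambda>A r. phi T ((c + of_bool (A = B)) + m' A r))"
  define v where "v = (\<lambda>A r. phi T ((c + of_bool (A = B)) + n' A r))"
  define \<kappa> where "\<kappa> = real N * \<Delta>\<^sup>2 / 2"
  have finS: "finite S" unfolding S_def by (rule finite_superarms)
  have BS: "B \<in> S" using B unfolding S_def .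
  have w0: "\<And>A. 0 \<le> w A" unfolding w_def by simp
  have w1: "sum w S = 1" unfolding w_def S_def using pol_sum[OF pol] .
  have QP: "\<And>A. prob_space (Q A)" unfolding Q_def by (rule prob_RM)
  have QDP: "\<And>A. prob_space (QD A)" unfolding QD_def by (rule prob_RM)
  have m'i: "integrable (Q A) (m' A) \<and> 0 \<le> (\<integral>r. m' A r \<partial>Q A) \<and> (\<integral>r. m' A r \<partial>Q A) \<le> real k" if "A \<in> S" for A
    using cnt_int[OF pol that[unfolded S_def] h, where Y'="YB 0 B" and A'=A and Y="YB 0 B" and B=B and k=k]
    unfolding m'_def Q_def by simp
  have n'i: "integrable (Q A) (n' A)" if "A \<in> S" for A
    using cnt_int[OF pol that[unfolded S_def] h, where Y'="YB 0 B" and A'=A and Y="YB \<Delta> B" and B=B and k=k]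
    unfolding n'_def Q_def by simp
  have n'iD: "integrable (QD A) (n' A)" if "A \<in> S" for A
    using cnt_int[OF pol that[unfolded S_def] h, where Y'="YB \<Delta> B" and A'=A and Y="YB \<Delta> B" and B=B and k=k]
    unfolding n'_def QD_def by simp
  have m'b: "0 \<le> m' A r \<and> m' A r \<le> real k" if "A \<in> S" "r \<in> space (Q A)" for A r
    using cnt_props[OF pol, of "YB 0 B" B k "Suc t"] upd_space[OF that(1)[unfolded S_def] h, of r "YB 0 B" A] that(2)
    unfolding m'_def Q_def by auto
  have n'b: "0 \<le> n' A r \<and> n' A r \<le> real k" if "A \<in> S" "r \<in> space (Q A)" for A r
    using cnt_props[OF pol, of "YB \<Delta> B" B k "Suc t"] upd_space[OF that(1)[unfolded S_def] h, of r "YB 0 B" A] that(2)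
    unfolding n'_def Q_def by auto
  have cb: "0 \<le> c + of_bool (A = B)" "c + of_bool (A = B) + real k \<le> real T" for A
    using c0 cT by auto
  have ub: "1/3 \<le> u A r \<and> u A r \<le> 2/3 \<and> 1/3 \<le> v A r \<and> v A r \<le> 2/3" if "A \<in> S" "r \<in> space (Q A)" for A r
    unfolding u_def v_def using phi_bounds[OF T] m'b[OF that] n'b[OF that] cb[of A] by auto
  have ui: "integrable (Q A) (u A)" if "A \<in> S" for A
  proof -
    interpret prob_space "Q A" by (rule QP)
    show ?thesis unfolding u_def phi_def using m'i[OF that] by auto
  qed
  have vi: "integrable (Q A) (v A)" if "A \<in> S" for A
  proof -
    interpret prob_space "Q A" by (rule QP)
    show ?thesis unfolding v_def phi_def using n'i[OF that] by auto
  qed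
  have um: "u A \<in> borel_measurable (Q A)" if "A \<in> S" for A using ui[OF that] by (rule borel_measurable_integrable)
  have vm: "v A \<in> borel_measurable (Q A)" if "A \<in> S" for A using vi[OF that] by (rule borel_measurable_integrable)
  have bq: "phi T (c + cnt N K (YB 0 B) \<pi> B (Suc k) t h) = (\<Sum>A\<in>S. w A * (\<integral>r. u A r \<partial>Q A))"
  proof -
    have "(\<Sum>A\<in>S. w A * (\<integral>r. u A r \<partial>Q A)) = (\<Sum>A\<in>S. w A * phi T (c + (of_bool (A = B) + (\<integral>r. m' A r \<partial>Q A))))"
    proof (intro sum.cong refl)
      fix A assume A: "A \<in> S"
      show "w A * (\<integral>r. u A r \<partial>Q A) = w A * phi T (c + (of_bool (A = B) + (\<integral>r. m' A r \<partial>Q A)))"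
        unfolding u_def using phi_int[OF QP, of A "m' A" T "c + of_bool (A = B)"] m'i[OF A] by (simp add: add.assoc)
    qed
    also have "\<dots> = phi T (c + (\<Sum>A\<in>S. w A * (of_bool (A = B) + (\<integral>r. m' A r \<partial>Q A))))"
      by (rule phi_sum[OF w1])
    finally show ?thesis unfolding S_def w_def m'_def Q_def by simp
  qed
  have aq: "phi T (c + cnt N K (YB \<Delta> B) \<pi> B (Suc k) t h) = (\<Sum>A\<in>S. w A * (\<integral>r. (if A = B then Lf N \<Delta> r else 1) * v A r \<partial>Q A))"
  proof -
    have eqA: "(\<integral>r. (if A = B then Lf N \<Delta> r else 1) * v A r \<partial>Q A) = (\<integral>r. v A r \<partial>QD A)" if A: "A \<in> S" for A
    proof (cases "A = B")
      case True
      then show ?thesis unfolding Q_def QD_def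
        using int_RM_B[of "v B" N B \<Delta>] vm[OF A] by (simp add: Q_def)
    next
      case False
      then show ?thesis unfolding Q_def QD_def using RM_other[OF False, of N \<Delta>] by simp
    qed
    have "(\<Sum>A\<in>S. w A * (\<integral>r. (if A = B then Lf N \<Delta> r else 1) * v A r \<partial>Q A))
        = (\<Sum>A\<in>S. w A * phi T (c + (of_bool (A = B) + (\<integral>r. n' A r \<partial>QD A))))"
    proof (intro sum.cong refl)
      fix A assume A: "A \<in> S"
      show "w A * (\<integral>r. (if A = B then Lf N \<Delta> r else 1) * v A r \<partial>Q A) = w A * phi T (c + (of_bool (A = B) + (\<integral>r. n' A r \<partial>QD A)))"
        using phi_int[OF QDP, of A "n' A" T "c + of_bool (A = B)"] n'iD[OF A]
        by (subst eqA[OF A]) (simp add: v_def add.assoc)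
    qed
    also have "\<dots> = phi T (c + (\<Sum>A\<in>S. w A * (of_bool (A = B) + (\<integral>r. n' A r \<partial>QD A))))"
      by (rule phi_sum[OF w1])
    finally show ?thesis unfolding S_def w_def n'_def QD_def by simp
  qed
  have step: "kl (\<Sum>A\<in>S. w A * (\<integral>r. u A r \<partial>Q A))
            (\<Sum>A\<in>S. w A * (\<integral>r. (if A = B then Lf N \<Delta> r else 1) * v A r \<partial>Q A))
         \<le> (\<Sum>A\<in>S. w A * (\<integral>r. kl (u A r) (v A r) \<partial>Q A)) - w B * (\<integral>r. ln (Lf N \<Delta> r) \<partial>Q B)"
  proof (rule kl_step[OF finS BS w0 w1 QP um vm ub])
    show "Lf N \<Delta> \<in> borel_measurable (Q B)" unfolding Q_def by (rule Lf_facts(1))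
    show "\<And>x. x \<in> space (Q B) \<Longrightarrow> 0 < Lf N \<Delta> x" using Lf_facts(2) by blast
    show "integrable (Q B) (Lf N \<Delta>)" unfolding Q_def by (rule Lf_facts(3))
    show "(\<integral>x. Lf N \<Delta> x \<partial>Q B) = 1" unfolding Q_def by (rule Lf_facts(4))
    show "integrable (Q B) (\<lambda>x. ln (Lf N \<Delta> x))" unfolding Q_def by (rule Lf_facts(5))
  qed
  have lnint: "(\<integral>r. ln (Lf N \<Delta> r) \<partial>Q B) = - \<kappa>" unfolding Q_def \<kappa>_def by (rule Lf_facts(6))
  have klA: "(\<integral>r. kl (u A r) (v A r) \<partial>Q A) \<le> \<kappa> * (\<integral>r. m' A r \<partial>Q A)" if A: "A \<in> S" for A
  proof -
    have "(\<integral>r. kl (u A r) (v A r) \<partial>Q A) \<le> (\<integral>r. \<kappa> * m' A r \<partial>Q A)"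
    proof (rule integral_mono)
      show "integrable (Q A) (\<lambda>r. kl (u A r) (v A r))"
        using kl_integrable[OF QP um[OF A] vm[OF A]] ub[OF A] by auto
      show "integrable (Q A) (\<lambda>r. \<kappa> * m' A r)" using m'i[OF A] by auto
      fix r assume r: "r \<in> space (Q A)"
      have hs: "h(t := (A, r)) \<in> space (histM N K (Suc t))"
        using upd_space[OF A[unfolded S_def] h, of r "YB 0 B" A] r unfolding Q_def by simp
      show "kl (u A r) (v A r) \<le> \<kappa> * m' A r"
        unfolding u_def v_def m'_def n'_def \<kappa>_def
        by (rule Suc.IH[OF hs cb(1)[of A] cb(2)[of A]])
    qed
    then show ?thesis by simp
  qed
  have "kl (phi T (c + cnt N K (YB 0 B) \<pi> B (Suc k) t h)) (phi T (c + cnt N K (YB \<Delta> B) \<pi> B (Suc k) t h))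
      \<le> (\<Sum>A\<in>S. w A * (\<integral>r. kl (u A r) (v A r) \<partial>Q A)) + w B * \<kappa>"
    using step unfolding bq aq lnint by simp
  also have "\<dots> \<le> (\<Sum>A\<in>S. w A * (\<kappa> * (\<integral>r. m' A r \<partial>Q A))) + w B * \<kappa>"
    using klA w0 by (intro add_right_mono sum_mono mult_left_mono) auto
  also have "\<dots> = \<kappa> * (\<Sum>A\<in>S. w A * (of_bool (A = B) + (\<integral>r. m' A r \<partial>Q A)))"
  proof -
    have "(\<Sum>A\<in>S. w A * of_bool (A = B)) = w B"
      using finS BS by (simp add: of_bool_def if_distrib sum.delta cong: if_cong)
    then show ?thesis
      by (simp add: sum_distrib_left sum.distrib algebra_simps)
  qed
  also have "\<dots> = \<kappa> * cnt N K (YB 0 B) \<pi> B (Suc k) t h"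
    unfolding S_def w_def m'_def Q_def by simp
  finally show ?case unfolding \<kappa>_def .
qed


lemma YB_0: "YB 0 B = (\<lambda>i A. 1/2)"
  by (simp add: YB_def fun_eq_iff)

lemma h0_space: "(\<lambda>_. undefined) \<in> space (histM N K 0)"
  unfolding space_histM by simp

lemma card_superarms: "card (superarms N K) = K ^ N"
  unfolding superarms_def by (simp add: card_PiE)

lemma max_val:
  assumes N: "N \<ge> 1" and B: "B \<in> superarms N K" and D: "0 \<le> \<Delta>"
  shows "Max ((\<lambda>A. (1 / real N) * (\<Sum>i<N. YB \<Delta> B i A)) ` superarms N K) = 1/2 + \<Delta>"
proof -
  have v: "(1 / real N) * (\<Sum>i<N. YB \<Delta> B i A) = 1/2 + (if A = B then \<Delta> else 0)" for A
    using N by (simp add: YB_def)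
  show ?thesis unfolding v
  proof (rule Max_eqI)
    show "finite ((\<lambda>A. 1/2 + (if A = B then \<Delta> else 0)) ` superarms N K)"
      using finite_superarms by simp
    show "y \<le> 1/2 + \<Delta>" if "y \<in> (\<lambda>A. 1/2 + (if A = B then \<Delta> else 0)) ` superarms N K" for y
      using that D by auto
    show "1/2 + \<Delta> \<in> (\<lambda>A. 1/2 + (if A = B then \<Delta> else 0)) ` superarms N K"
      using B by force
  qed
qed

lemma regret_formula:
  assumes pol: "admissible_policy N K \<pi>" and N: "N \<ge> 1" and B: "B \<in> superarms N K" and D: "0 \<le> \<Delta>"
  shows "naive_regret N K (YB \<Delta> B) noiseP \<pi> T = \<Delta> * (real T - cnt N K (YB \<Delta> B) \<pi> B T 0 (\<lambda>_. undefined))"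
  unfolding naive_regret_def max_val[OF N B D] exp_formula[OF pol N h0_space]
  by (simp add: algebra_simps)

lemma admissible_YB:
  assumes "0 \<le> \<Delta>" "\<Delta> \<le> 1/2"
  shows "admissible_instance N K (YB \<Delta> B) noiseP"
  unfolding admissible_instance_def using admissible_noise assms by (auto simp: YB_def)

lemma amgm_bound:
  fixes d a s :: real
  assumes "d\<^sup>2 \<le> 4 * a" "0 \<le> a" "0 < s"
  shows "d \<le> a / s + s"
proof -
  have "(a / s + s)\<^sup>2 = (a / s - s)\<^sup>2 + 4 * a"
    using assms(3) by (simp add: power2_eq_square field_simps)
  then have "d\<^sup>2 \<le> (a / s + s)\<^sup>2" using assms(1) by (smt (verit) zero_le_power2)
  moreover have "0 \<le> a / s + s" using assms(2,3) by simp
  ultimately show ?thesis by (rule power2_le_imp_le)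
qed


lemma sqrt_T_eq:
  assumes "0 < T" "0 < N" "0 \<le> M"
  shows "sqrt (M / (N * T)) * T = sqrt (M * T) / sqrt N"
proof -
  have "sqrt (M / (N * T)) * T = sqrt M / (sqrt N * sqrt T) * (sqrt T * sqrt T)"
    using assms by (simp add: real_sqrt_divide real_sqrt_mult)
  also have "\<dots> = sqrt M * sqrt T / sqrt N"
    using assms by (simp add: field_simps)
  finally show ?thesis by (simp add: real_sqrt_mult)
qed

lemma final_ineq:
  fixes T N M \<Delta> :: real
  assumes T: "0 < T" and N: "1 \<le> N" and M: "0 \<le> M"
    and D: "\<Delta> = min (1/2) (sqrt (M / (N * T)) / 24)"
  shows "(1/96) * (1 / sqrt N) * min T (sqrt (M * T)) \<le> \<Delta> * T / 4"
proof -
  have sN: "1 \<le> sqrt N" using N by simp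
  have mT: "min T (sqrt (M * T)) \<le> T" "min T (sqrt (M * T)) \<le> sqrt (M * T)" by auto
  have mT0: "0 \<le> min T (sqrt (M * T))" using T M by simp
  show ?thesis
  proof (cases "\<Delta> = 1/2")
    case True
    have x: "(1 / sqrt N) * min T (sqrt (M * T)) \<le> 1 * T"
      using sN mT mT0 by (intro mult_mono) (auto simp: divide_le_eq)
    have y: "1/96 * (1 / sqrt N) * min T (sqrt (M * T)) = 1/96 * ((1 / sqrt N) * min T (sqrt (M * T)))"
      by simp
    show ?thesis unfolding True using x y T by linarith
  next
    case False
    then have D': "\<Delta> = sqrt (M / (N * T)) / 24" using D by (auto simp: min_def split: if_splits)
    have "\<Delta> * T / 4 = sqrt (M * T) / sqrt N / 96"
      unfolding D' using sqrt_T_eq[OF T _ M, of N] N by simp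
    moreover have "(1 / sqrt N) * min T (sqrt (M * T)) \<le> (1 / sqrt N) * sqrt (M * T)"
      using mT sN by (intro mult_left_mono) auto
    ultimately show ?thesis by simp
  qed
qed

lemma main_pos:
  assumes pol: "admissible_policy N K \<pi>" and N: "N \<ge> 1" and K: "K \<ge> 2" and T: "T > 0"
  shows "\<exists>Y P. admissible_instance N K Y P \<and>
           naive_regret N K Y P \<pi> T \<ge> (1/96) * (1 / sqrt (real N)) * min (real T) (sqrt (real K ^ N * real T))"
proof -
  define S where "S = superarms N K"
  define M where "M = real K ^ N"
  have cardS: "real (card S) = M" unfolding S_def M_def card_superarms by simp
  have finS: "finite S" unfolding S_def by (rule finite_superarms)
  have M2: "2 \<le> M"
  proof -
    have "K \<le> K ^ N" using K N by (intro self_le_power) auto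
    then have "real K \<le> real K ^ N" by (metis of_nat_le_iff of_nat_power)
    then show ?thesis using K unfolding M_def by linarith
  qed
  have Tpos: "0 < real T" using T by simp
  define \<Delta> where "\<Delta> = min (1/2) (sqrt (M / (real N * real T)) / 24)"
  have D0: "0 \<le> \<Delta>" unfolding \<Delta>_def using M2 by simp
  have D1: "\<Delta> \<le> 1/2" unfolding \<Delta>_def by simp
  define \<kappa> where "\<kappa> = real N * \<Delta>\<^sup>2 / 2"
  have k0: "0 \<le> \<kappa>" unfolding \<kappa>_def by simp
  have kT: "\<kappa> * real T \<le> M / 1152"
  proof -
    have "\<Delta> \<le> sqrt (M / (real N * real T)) / 24" unfolding \<Delta>_def by simp
    then have "\<Delta>\<^sup>2 \<le> (sqrt (M / (real N * real T)) / 24)\<^sup>2" using D0 by (intro power_mono) auto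
    also have "\<dots> = M / (real N * real T) / 576"
      using M2 N Tpos by (simp add: power_divide)
    finally have "\<Delta>\<^sup>2 \<le> M / (real N * real T) / 576" .
    then have "real N * real T * \<Delta>\<^sup>2 \<le> real N * real T * (M / (real N * real T) / 576)"
      using N Tpos by (intro mult_left_mono) auto
    also have "\<dots> = M / 576" using N Tpos by simp
    finally show ?thesis unfolding \<kappa>_def by (simp add: algebra_simps)
  qed
  define s :: real where "s = 1 / 48"
  have s0: "0 < s" unfolding s_def by simp
  define h0 :: history where "h0 = (\<lambda>_. undefined)"
  have h0s: "h0 \<in> space (histM N K 0)" unfolding h0_def by (rule h0_space)
  define m where "m B = cnt N K (YB 0 B) \<pi> B T 0 h0" for B
  define n where "n B = cnt N K (YB \<Delta> B) \<pi> B T 0 h0" for B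
  have mb: "0 \<le> m B \<and> m B \<le> real T" for B
    unfolding m_def using cnt_props[OF pol, of "YB 0 B" B T 0] h0s by auto
  have nb: "0 \<le> n B \<and> n B \<le> real T" for B
    unfolding n_def using cnt_props[OF pol, of "YB \<Delta> B" B T 0] h0s by auto
  have nm: "n B \<le> m B + 3 * real T * (\<kappa> * m B / s + s)" if B: "B \<in> S" for B
  proof -
    have klb: "kl (phi T (0 + m B)) (phi T (0 + n B)) \<le> \<kappa> * m B"
      unfolding m_def n_def \<kappa>_def
      using kl_rec[OF pol T B[unfolded S_def] h0s, of 0 T \<Delta>] by simp
    have pm: "1/3 \<le> phi T (m B) \<and> phi T (m B) \<le> 2/3" using phi_bounds[OF T] mb[of B] by auto
    have pn: "1/3 \<le> phi T (n B) \<and> phi T (n B) \<le> 2/3" using phi_bounds[OF T] nb[of B] by auto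
    have "(phi T (m B) - phi T (n B))\<^sup>2 / 4 \<le> kl (phi T (m B)) (phi T (n B))"
      using pm pn by (intro kl_pinsker) auto
    with klb have "(phi T (m B) - phi T (n B))\<^sup>2 \<le> 4 * (\<kappa> * m B)" by simp
    moreover have "(phi T (m B) - phi T (n B))\<^sup>2 = ((n B - m B) / (3 * real T))\<^sup>2"
    proof -
      have "phi T (m B) - phi T (n B) = (m B - n B) / (3 * real T)"
        unfolding phi_def by (simp add: diff_divide_distrib)
      then show ?thesis by (simp add: power_divide power2_commute)
    qed
    ultimately have "((n B - m B) / (3 * real T))\<^sup>2 \<le> 4 * (\<kappa> * m B)" by simp
    then have "(n B - m B) / (3 * real T) \<le> \<kappa> * m B / s + s"
      using k0 mb[of B] s0 by (intro amgm_bound) auto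
    then show ?thesis using Tpos by (simp add: divide_le_eq algebra_simps)
  qed
  have msum: "(\<Sum>B\<in>S. m B) = real T"
  proof -
    have "(\<Sum>B\<in>S. m B) = (\<Sum>B\<in>S. cnt N K (\<lambda>i A. 1/2) \<pi> B T 0 h0)"
      unfolding m_def YB_0 ..
    also have "\<dots> = real T" unfolding S_def by (rule cnt_sum[OF pol h0s])
    finally show ?thesis .
  qed
  have "(\<Sum>B\<in>S. n B) \<le> (\<Sum>B\<in>S. m B + 3 * real T * (\<kappa> * m B / s + s))"
    using nm by (intro sum_mono) auto
  also have "\<dots> = (\<Sum>B\<in>S. m B) + 3 * real T * \<kappa> / s * (\<Sum>B\<in>S. m B) + 3 * real T * s * real (card S)"
  proof -
    have eqB: "m B + 3 * real T * (\<kappa> * m B / s + s) = m B + 3 * real T * \<kappa> / s * m B + 3 * real T * s" for B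
      using s0 by (simp add: field_simps)
    show ?thesis unfolding eqB by (simp add: sum.distrib sum_distrib_left)
  qed
  also have "\<dots> = real T + 3 * real T * (\<kappa> * real T) / s + 3 * real T * s * M"
    unfolding msum cardS by simp
  also have "\<dots> \<le> real T + 3 * real T * (M / 1152) / s + 3 * real T * s * M"
    using kT Tpos s0 by (intro add_mono divide_right_mono mult_left_mono) auto
  also have "\<dots> = real T + M * real T / 8 + M * real T / 16"
    unfolding s_def by (simp add: field_simps)
  also have "\<dots> < 3 / 4 * M * real T"
  proof -
    have "2 * real T \<le> M * real T" using M2 Tpos by (intro mult_right_mono) auto
    then show ?thesis using Tpos by linarith
  qed
  finally have nsum: "(\<Sum>B\<in>S. n B) < 3 / 4 * M * real T" .
  obtain B where B: "B \<in> S" and nB: "n B \<le> 3 / 4 * real T"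
  proof (rule ccontr)
    assume "\<not> thesis"
    then have "\<forall>B\<in>S. 3 / 4 * real T < n B" using that by force
    then have "(\<Sum>B\<in>S. 3 / 4 * real T) \<le> (\<Sum>B\<in>S. n B)" by (intro sum_mono) auto
    then have "real (card S) * (3 / 4 * real T) \<le> (\<Sum>B\<in>S. n B)" by simp
    then show False using nsum cardS by (simp add: algebra_simps)
  qed
  have reg: "naive_regret N K (YB \<Delta> B) noiseP \<pi> T = \<Delta> * (real T - n B)"
    unfolding n_def h0_def using regret_formula[OF pol N B[unfolded S_def] D0] .
  have "\<Delta> * real T / 4 \<le> \<Delta> * (real T - n B)"
  proof -
    have "real T / 4 \<le> real T - n B" using nB by linarith
    then have "\<Delta> * (real T / 4) \<le> \<Delta> * (real T - n B)" using D0 by (rule mult_left_mono)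
    then show ?thesis by simp
  qed
  moreover have "(1/96) * (1 / sqrt (real N)) * min (real T) (sqrt (M * real T)) \<le> \<Delta> * real T / 4"
    using final_ineq[OF Tpos _ _ \<Delta>_def] N M2 by simp
  ultimately have "(1/96) * (1 / sqrt (real N)) * min (real T) (sqrt (real K ^ N * real T)) \<le> naive_regret N K (YB \<Delta> B) noiseP \<pi> T"
    unfolding reg M_def by linarith
  then show ?thesis using admissible_YB[OF D0 D1] by blast
qed


theorem proposition1:
  shows "\<exists>c>0. \<forall>(N::nat) (K::nat) (T::nat) (H::nat \<Rightarrow> nat \<Rightarrow> real) (\<pi>::policy).
           N \<ge> 1 \<longrightarrow> K \<ge> 2 \<longrightarrow> admissible_policy N K \<pi> \<longrightarrow>
           (\<exists>Y P. admissible_instance N K Y P \<and>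
              naive_regret N K Y P \<pi> T \<ge> c * (1 / sqrt (real N)) * min (real T) (sqrt (real K ^ N * real T)))"
proof (rule exI[of _ "1/96"], intro conjI allI impI)
  show "(0::real) < 1/96" by simp
  fix N K T :: nat and H :: "nat \<Rightarrow> nat \<Rightarrow> real" and \<pi> :: policy
  assume N: "N \<ge> 1" and K: "K \<ge> 2" and pol: "admissible_policy N K \<pi>"
  show "\<exists>Y P. admissible_instance N K Y P \<and>
          naive_regret N K Y P \<pi> T \<ge> 1/96 * (1 / sqrt (real N)) * min (real T) (sqrt (real K ^ N * real T))"
  proof (cases "T = 0")
    case True
    have "admissible_instance N K (YB 0 undefined) noiseP" by (rule admissible_YB) auto
    moreover have "naive_regret N K (YB 0 undefined) noiseP \<pi> T = 0"
      using True by (simp add: naive_regret_def)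
    ultimately show ?thesis using True by (intro exI[of _ "YB 0 undefined"] exI[of _ noiseP]) simp
  next
    case False
    then show ?thesis using main_pos[OF pol N K] by simp
  qed
qed


end
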